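(* Let $n=2$, $c\equiv1$ and $u_0(x)=-|x|$. For $\varepsilon>0$ let $u^\varepsilon$ be the unique viscosity solution of $$u^\varepsilon_t-\varepsilon\,\mathrm{tr}\{(I_2-\widehat{Du^\varepsilon}\otimes\widehat{Du^\varepsilon})D^2u^\varepsilon\}-|Du^\varepsilon|=0\ \text{in }\mathbb{R}^2\times(0,\infty),\qquad u^\varepsilon(\cdot,0)=u_0,$$ (i.e. $u^\varepsilon_t+F(\varepsilon D^2u^\varepsilon,Du^\varepsilon,x/\varepsilon)=0$ with $F(X,p,y)=-\mathrm{tr}\{(I_2-\hat p\otimes\hat p)X\}-c(y)|p|$), and let $u$ be the unique viscosity solution of the effective problem $u_t+\overline{F}(Du/|Du|)|Du|=0$ in $\mathbb{R}^2\times(0,\infty)$, $u(\cdot,0)=u_0$. Then for any $\varepsilon>0$ and any $(x,t)\in\mathbb{R}^2\times[0,\infty)$ with $|x|=t>\varepsilon(1+e^{-1})$, $$|u^\varepsilon(x,t)-u(x,t)|\geq\frac12\varepsilon\Big(\log\Big(\frac{t}{\varepsilon}-1\Big)+1\Big).$$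
   Context: $\hat p=p/|p|$ for $p\neq0$. For each $p\in\mathbb{R}^2$, $\overline{F}(p)$ denotes the unique real number such that $F(D^2v,p+Dv,y)=\overline{F}(p)$ admits a $\mathbb{Z}^2$-periodic viscosity solution (for $c\equiv1$ this gives $\overline{F}(p)=-|p|$). Solutions are viscosity solutions in the sense appropriate for geometric equations. *)

theory Defs
  imports "HOL-Analysis.Analysis"
begin

type_synonym vec2 = "real^2"
type_synonym mat2 = "real^2^2"

text \<open>Unit vector \<open>p/|p|\<close> (only used for \<open>p \<noteq> 0\<close>).\<close>
definition unitv :: "vec2 \<Rightarrow> vec2" where
  "unitv p = (1 / norm p) *\<^sub>R p"

definition outer :: "vec2 \<Rightarrow> vec2 \<Rightarrow> mat2" where
  "outer a b = (\<chi> i j. a $ i * b $ j)"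

definition cfun :: "vec2 \<Rightarrow> real" where
  "cfun y = 1"

definition Fop :: "mat2 \<Rightarrow> vec2 \<Rightarrow> vec2 \<Rightarrow> real" where
  "Fop X p y = - trace ((mat 1 - outer (unitv p) (unitv p)) ** X) - cfun y * norm p"

text \<open>Lower / upper semicontinuous envelopes in \<open>(X,p)\<close> of an operator that is
  defined only for \<open>p \<noteq> 0\<close> (geometric equations).\<close>
definition lower_env :: "(mat2 \<Rightarrow> vec2 \<Rightarrow> real) \<Rightarrow> mat2 \<Rightarrow> vec2 \<Rightarrow> real" where
  "lower_env G X p = (SUP \<delta>\<in>{0<..}. INF Yq\<in>{(Y,q). dist (Y,q) (X,p) < \<delta> \<and> q \<noteq> 0}. G (fst Yq) (snd Yq))"

definition upper_env :: "(mat2 \<Rightarrow> vec2 \<Rightarrow> real) \<Rightarrow> mat2 \<Rightarrow> vec2 \<Rightarrow> real" where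
  "upper_env G X p = (INF \<delta>\<in>{0<..}. SUP Yq\<in>{(Y,q). dist (Y,q) (X,p) < \<delta> \<and> q \<noteq> 0}. G (fst Yq) (snd Yq))"

definition C2_test :: "(vec2 \<Rightarrow> real) \<Rightarrow> (vec2 \<Rightarrow> vec2) \<Rightarrow> (vec2 \<Rightarrow> mat2) \<Rightarrow> bool" where
  "C2_test \<phi> D\<phi> D2\<phi> \<longleftrightarrow>
     continuous_on UNIV D2\<phi> \<and>
     (\<forall>y. (\<phi> has_derivative (\<lambda>h. D\<phi> y \<bullet> h)) (at y)) \<and>
     (\<forall>y. (D\<phi> has_derivative (\<lambda>h. D2\<phi> y *v h)) (at y))"

definition C21_test :: "(vec2 \<times> real \<Rightarrow> real) \<Rightarrow> (vec2 \<times> real \<Rightarrow> real) \<Rightarrow>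
    (vec2 \<times> real \<Rightarrow> vec2) \<Rightarrow> (vec2 \<times> real \<Rightarrow> mat2) \<Rightarrow> bool" where
  "C21_test \<phi> \<phi>t D\<phi> D2\<phi> \<longleftrightarrow>
     continuous_on UNIV \<phi>t \<and> continuous_on UNIV D\<phi> \<and> continuous_on UNIV D2\<phi> \<and>
     (\<forall>x t. ((\<lambda>s. \<phi> (x, s)) has_real_derivative \<phi>t (x, t)) (at t)) \<and>
     (\<forall>x t. ((\<lambda>y. \<phi> (y, t)) has_derivative (\<lambda>h. D\<phi> (x, t) \<bullet> h)) (at x)) \<and>
     (\<forall>x t. ((\<lambda>y. D\<phi> (y, t)) has_derivative (\<lambda>h. D2\<phi> (x, t) *v h)) (at x))"

text \<open>Viscosity sub/supersolutions (geometric sense) of the cell problem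
  \<open>H(D^2v, P + Dv, y) = \<lambda>\<close> on \<open>\<real>^2\<close>.\<close>
definition cell_sub :: "(mat2 \<Rightarrow> vec2 \<Rightarrow> vec2 \<Rightarrow> real) \<Rightarrow> vec2 \<Rightarrow> real \<Rightarrow> (vec2 \<Rightarrow> real) \<Rightarrow> bool" where
  "cell_sub H P lam v \<longleftrightarrow>
     (\<forall>\<phi> D\<phi> D2\<phi> y. C2_test \<phi> D\<phi> D2\<phi> \<longrightarrow>
        (\<exists>r>0. \<forall>w\<in>ball y r. v w - \<phi> w \<le> v y - \<phi> y) \<longrightarrow>
        lower_env (\<lambda>X q. H X q y) (D2\<phi> y) (P + D\<phi> y) \<le> lam)"

definition cell_super :: "(mat2 \<Rightarrow> vec2 \<Rightarrow> vec2 \<Rightarrow> real) \<Rightarrow> vec2 \<Rightarrow> real \<Rightarrow> (vec2 \<Rightarrow> real) \<Rightarrow> bool" where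
  "cell_super H P lam v \<longleftrightarrow>
     (\<forall>\<phi> D\<phi> D2\<phi> y. C2_test \<phi> D\<phi> D2\<phi> \<longrightarrow>
        (\<exists>r>0. \<forall>w\<in>ball y r. v w - \<phi> w \<ge> v y - \<phi> y) \<longrightarrow>
        upper_env (\<lambda>X q. H X q y) (D2\<phi> y) (P + D\<phi> y) \<ge> lam)"

definition periodic2 :: "(vec2 \<Rightarrow> real) \<Rightarrow> bool" where
  "periodic2 v \<longleftrightarrow> (\<forall>y i. v (y + axis i 1) = v y)"

definition Fbar :: "vec2 \<Rightarrow> real" where
  "Fbar p = (THE lam. \<exists>v. continuous_on UNIV v \<and> periodic2 v \<and>
                         cell_sub Fop p lam v \<and> cell_super Fop p lam v)"

text \<open>Viscosity sub/supersolutions (geometric sense) of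
  \<open>u_t + G(D^2u, Du, x) = 0\<close> in \<open>\<real>^2 \<times> (0,\<infinity>)\<close>.\<close>
definition par_sub :: "(mat2 \<Rightarrow> vec2 \<Rightarrow> vec2 \<Rightarrow> real) \<Rightarrow> (vec2 \<times> real \<Rightarrow> real) \<Rightarrow> bool" where
  "par_sub G u \<longleftrightarrow>
     (\<forall>\<phi> \<phi>t D\<phi> D2\<phi> x t. C21_test \<phi> \<phi>t D\<phi> D2\<phi> \<longrightarrow> t > 0 \<longrightarrow>
        (\<exists>r>0. \<forall>w\<in>ball (x,t) r. u w - \<phi> w \<le> u (x,t) - \<phi> (x,t)) \<longrightarrow>
        \<phi>t (x,t) + lower_env (\<lambda>X q. G X q x) (D2\<phi> (x,t)) (D\<phi> (x,t)) \<le> 0)"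

definition par_super :: "(mat2 \<Rightarrow> vec2 \<Rightarrow> vec2 \<Rightarrow> real) \<Rightarrow> (vec2 \<times> real \<Rightarrow> real) \<Rightarrow> bool" where
  "par_super G u \<longleftrightarrow>
     (\<forall>\<phi> \<phi>t D\<phi> D2\<phi> x t. C21_test \<phi> \<phi>t D\<phi> D2\<phi> \<longrightarrow> t > 0 \<longrightarrow>
        (\<exists>r>0. \<forall>w\<in>ball (x,t) r. u w - \<phi> w \<ge> u (x,t) - \<phi> (x,t)) \<longrightarrow>
        \<phi>t (x,t) + upper_env (\<lambda>X q. G X q x) (D2\<phi> (x,t)) (D\<phi> (x,t)) \<ge> 0)"

text \<open>Solution of the Cauchy problem with initial datum \<open>u0\<close>, in the uniqueness class
  of continuous functions on \<open>\<real>^2 \<times> [0,\<infinity>)\<close> that are uniformly continuous on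
  \<open>\<real>^2 \<times> [0,T]\<close> for every \<open>T\<close>.\<close>
definition cauchy_sol :: "(mat2 \<Rightarrow> vec2 \<Rightarrow> vec2 \<Rightarrow> real) \<Rightarrow> (vec2 \<Rightarrow> real) \<Rightarrow> (vec2 \<times> real \<Rightarrow> real) \<Rightarrow> bool" where
  "cauchy_sol G u0 u \<longleftrightarrow>
     continuous_on (UNIV \<times> {0..}) u \<and>
     (\<forall>T\<ge>0. uniformly_continuous_on (UNIV \<times> {0..T}) u) \<and>
     (\<forall>x. u (x, 0) = u0 x) \<and> par_sub G u \<and> par_super G u"

definition Feps :: "real \<Rightarrow> mat2 \<Rightarrow> vec2 \<Rightarrow> vec2 \<Rightarrow> real" where
  "Feps \<epsilon> X p x = Fop (\<epsilon> *\<^sub>R X) p ((1 / \<epsilon>) *\<^sub>R x)"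

definition Feff :: "mat2 \<Rightarrow> vec2 \<Rightarrow> vec2 \<Rightarrow> real" where
  "Feff X p x = Fbar (unitv p) * norm p"

end

theory Submission
  imports Defs
begin

definition trm :: "vec2 \<Rightarrow> mat2 \<Rightarrow> real" where
  "trm u Z = trace ((mat 1 - outer u u) ** Z)"

lemma one_neq_two2: "(1::2) \<noteq> 2" by simp

lemma trm_expl: "trm u Z = Z$1$1 + Z$2$2 - (u$1*u$1*Z$1$1 + u$1*u$2*Z$2$1 + u$2*u$1*Z$1$2 + u$2*u$2*Z$2$2)"
  unfolding trm_def trace_def matrix_matrix_mult_def outer_def
  by (simp add: sum_2 mat_def algebra_simps)

lemma inner2: "(x::vec2) \<bullet> y = x$1*y$1 + x$2*y$2"
  by (simp add: inner_vec_def sum_2)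

lemma norm2: "norm (x::vec2) = sqrt (x$1^2 + x$2^2)"
  by (simp add: norm_eq_sqrt_inner inner2 power2_eq_square)

lemma norm2sq: "(norm (x::vec2))^2 = x$1^2 + x$2^2"
  by (simp add: norm2)

lemma vec2_eq: "((x::vec2) = y) \<longleftrightarrow> x$1 = y$1 \<and> x$2 = y$2"
  by (simp add: vec_eq_iff forall_2)

lemma mat2_eq: "((X::mat2) = Y) \<longleftrightarrow> X$1$1 = Y$1$1 \<and> X$1$2 = Y$1$2 \<and> X$2$1 = Y$2$1 \<and> X$2$2 = Y$2$2"
  by (simp add: vec_eq_iff forall_2)

lemma mv2: fixes X :: mat2 and h :: vec2 shows "(X *v h)$1 = X$1$1*h$1 + X$1$2*h$2" "(X *v h)$2 = X$2$1*h$1 + X$2$2*h$2"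
  by (simp_all add: matrix_vector_mult_def sum_2)

lemma outer_mv: "outer x x *v h = (x \<bullet> h) *\<^sub>R x"
  by (simp add: vec2_eq mv2 outer_def inner2 algebra_simps)

definition locbdd :: "(mat2 \<Rightarrow> vec2 \<Rightarrow> real) \<Rightarrow> bool" where
  "locbdd G \<longleftrightarrow> (\<forall>R. \<exists>M. \<forall>Y q. norm Y \<le> R \<longrightarrow> norm q \<le> R \<longrightarrow> q \<noteq> 0 \<longrightarrow> \<bar>G Y q\<bar> \<le> M)"

definition nbhd :: "mat2 \<Rightarrow> vec2 \<Rightarrow> real \<Rightarrow> (mat2 \<times> vec2) set" where
  "nbhd X p d = {(Y,q). dist (Y,q) (X,p) < d \<and> q \<noteq> 0}"

lemma nbhd_norms:
  assumes "(Y,q) \<in> nbhd X p d"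
  shows "norm Y \<le> norm X + d" "norm q \<le> norm p + d"
proof -
  have d: "dist (Y,q) (X,p) < d" using assms by (simp add: nbhd_def)
  have "dist Y X \<le> dist (Y,q) (X,p)" "dist q p \<le> dist (Y,q) (X,p)"
    using dist_fst_le[of "(Y,q)" "(X,p)"] dist_snd_le[of "(Y,q)" "(X,p)"] by auto
  then show "norm Y \<le> norm X + d" "norm q \<le> norm p + d"
    using d norm_triangle_ineq2[of Y X] norm_triangle_ineq2[of q p]
    by (auto simp: dist_norm)
qed

definition ptn :: "mat2 \<Rightarrow> vec2 \<Rightarrow> real \<Rightarrow> mat2 \<times> vec2" where
  "ptn X p d = (X, if p \<noteq> 0 then p else (d/2) *\<^sub>R axis 1 1)"

lemma ptn_in:
  assumes "d > 0" shows "ptn X p d \<in> nbhd X p d"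
proof (cases "p = 0")
  case True
  have "norm (axis 1 (1::real) :: vec2) = 1" by (simp add: norm_eq_sqrt_inner inner_axis_axis)
  then show ?thesis using assms True
    by (simp add: ptn_def nbhd_def dist_Pair_Pair dist_norm axis_eq_0_iff)
next
  case False
  then show ?thesis using assms by (simp add: ptn_def nbhd_def dist_Pair_Pair)
qed

lemma nbhd_mono: "d \<le> e \<Longrightarrow> nbhd X p d \<subseteq> nbhd X p e"
  by (auto simp: nbhd_def)

lemma locbdd_nbhd:
  assumes "locbdd G"
  obtains M where "\<And>z. z \<in> nbhd X p d \<Longrightarrow> \<bar>G (fst z) (snd z)\<bar> \<le> M"
proof -
  obtain M where M: "\<And>Y q. norm Y \<le> norm X + norm p + \<bar>d\<bar> \<Longrightarrow> norm q \<le> norm X + norm p + \<bar>d\<bar> \<Longrightarrow> q \<noteq> 0 \<Longrightarrow> \<bar>G Y q\<bar> \<le> M"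
    using assms unfolding locbdd_def by blast
  show ?thesis
  proof (rule that)
    fix z assume z: "z \<in> nbhd X p d"
    obtain Y q where zz: "z = (Y,q)" by (cases z)
    have "norm Y \<le> norm X + d" "norm q \<le> norm p + d" using nbhd_norms z zz by auto
    moreover have "q \<noteq> 0" using z zz by (simp add: nbhd_def)
    ultimately show "\<bar>G (fst z) (snd z)\<bar> \<le> M" using M[of Y q] zz
      by (smt (verit) norm_ge_zero fst_conv snd_conv)
  qed
qed

lemma lower_env_alt: "lower_env G X p = (SUP d\<in>{0<..}. INF z\<in>nbhd X p d. G (fst z) (snd z))"
  by (simp add: lower_env_def nbhd_def)

lemma upper_env_alt: "upper_env G X p = (INF d\<in>{0<..}. SUP z\<in>nbhd X p d. G (fst z) (snd z))"
  by (simp add: upper_env_def nbhd_def)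

lemma lower_env_ge:
  assumes lb: "locbdd G" and d0: "d0 > 0"
    and L: "\<And>Y q. dist (Y,q) (X,p) < d0 \<Longrightarrow> q \<noteq> 0 \<Longrightarrow> L \<le> G Y q"
  shows "L \<le> lower_env G X p"
proof -
  let ?I = "\<lambda>d. INF z\<in>nbhd X p d. G (fst z) (snd z)"
  obtain M0 where M0: "\<And>z. z \<in> nbhd X p d0 \<Longrightarrow> \<bar>G (fst z) (snd z)\<bar> \<le> M0"
    using locbdd_nbhd[OF lb] by blast
  have bdd: "bdd_above (?I ` {0<..})"
  proof (rule bdd_aboveI2)
    fix d :: real assume "d \<in> {0<..}"
    then have dpos: "d > 0" by simp
    obtain M where M: "\<And>z. z \<in> nbhd X p d \<Longrightarrow> \<bar>G (fst z) (snd z)\<bar> \<le> M"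
      using locbdd_nbhd[OF lb] by blast
    let ?z = "ptn X p (min d d0)"
    have z1: "?z \<in> nbhd X p d" using ptn_in[of "min d d0" X p] nbhd_mono[of "min d d0" d X p] dpos d0 by auto
    have z2: "?z \<in> nbhd X p d0" using ptn_in[of "min d d0" X p] nbhd_mono[of "min d d0" d0 X p] dpos d0 by auto
    have "?I d \<le> G (fst ?z) (snd ?z)"
    proof (rule cINF_lower[OF _ z1])
      show "bdd_below ((\<lambda>z. G (fst z) (snd z)) ` nbhd X p d)"
        using M by (intro bdd_belowI2[where m="-M"]) (smt (verit))
    qed
    also have "\<dots> \<le> M0" using M0[OF z2] by simp
    finally show "?I d \<le> M0" .
  qed
  have "L \<le> ?I d0"
  proof (rule cINF_greatest)
    show "nbhd X p d0 \<noteq> {}" using ptn_in[OF d0] by blast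
    fix z assume "z \<in> nbhd X p d0"
    then show "L \<le> G (fst z) (snd z)" using L[of "fst z" "snd z"] by (auto simp: nbhd_def)
  qed
  also have "\<dots> \<le> (SUP d\<in>{0<..}. ?I d)"
    by (rule cSUP_upper[OF _ bdd]) (use d0 in simp)
  finally show ?thesis by (simp add: lower_env_alt)
qed

lemma upper_env_le:
  assumes lb: "locbdd G" and d0: "d0 > 0"
    and U: "\<And>Y q. dist (Y,q) (X,p) < d0 \<Longrightarrow> q \<noteq> 0 \<Longrightarrow> G Y q \<le> U"
  shows "upper_env G X p \<le> U"
proof -
  let ?I = "\<lambda>d. SUP z\<in>nbhd X p d. G (fst z) (snd z)"
  obtain M0 where M0: "\<And>z. z \<in> nbhd X p d0 \<Longrightarrow> \<bar>G (fst z) (snd z)\<bar> \<le> M0"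
    using locbdd_nbhd[OF lb] by blast
  have bdd: "bdd_below (?I ` {0<..})"
  proof (rule bdd_belowI2)
    fix d :: real assume "d \<in> {0<..}"
    then have dpos: "d > 0" by simp
    obtain M where M: "\<And>z. z \<in> nbhd X p d \<Longrightarrow> \<bar>G (fst z) (snd z)\<bar> \<le> M"
      using locbdd_nbhd[OF lb] by blast
    let ?z = "ptn X p (min d d0)"
    have z1: "?z \<in> nbhd X p d" using ptn_in[of "min d d0" X p] nbhd_mono[of "min d d0" d X p] dpos d0 by auto
    have z2: "?z \<in> nbhd X p d0" using ptn_in[of "min d d0" X p] nbhd_mono[of "min d d0" d0 X p] dpos d0 by auto
    have "-M0 \<le> G (fst ?z) (snd ?z)" using M0[OF z2] by simp
    also have "G (fst ?z) (snd ?z) \<le> ?I d"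
    proof (rule cSUP_upper[OF z1])
      show "bdd_above ((\<lambda>z. G (fst z) (snd z)) ` nbhd X p d)"
        using M by (intro bdd_aboveI2[where M="M"]) (smt (verit))
    qed
    finally show "-M0 \<le> ?I d" .
  qed
  have "(INF d\<in>{0<..}. ?I d) \<le> ?I d0"
    by (rule cINF_lower[OF bdd]) (use d0 in simp)
  also have "?I d0 \<le> U"
  proof (rule cSUP_least)
    show "nbhd X p d0 \<noteq> {}" using ptn_in[OF d0] by blast
    fix z assume "z \<in> nbhd X p d0"
    then show "G (fst z) (snd z) \<le> U" using U[of "fst z" "snd z"] by (auto simp: nbhd_def)
  qed
  finally show ?thesis by (simp add: upper_env_alt)
qed

lemma lower_env_le_center:
  assumes lb: "locbdd G" and p: "p \<noteq> 0"
  shows "lower_env G X p \<le> G X p"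
  unfolding lower_env_alt
proof (rule cSUP_least)
  show "{0<..} \<noteq> ({}::real set)" by auto
  fix d :: real assume "d \<in> {0<..}"
  then have dpos: "d > 0" by simp
  obtain M where M: "\<And>z. z \<in> nbhd X p d \<Longrightarrow> \<bar>G (fst z) (snd z)\<bar> \<le> M"
    using locbdd_nbhd[OF lb] by blast
  have "(X,p) \<in> nbhd X p d" using p dpos by (simp add: nbhd_def)
  moreover have "bdd_below ((\<lambda>z. G (fst z) (snd z)) ` nbhd X p d)"
    using M by (intro bdd_belowI2[where m="-M"]) (smt (verit))
  ultimately have "(INF z\<in>nbhd X p d. G (fst z) (snd z)) \<le> G (fst (X,p)) (snd (X,p))"
    by (intro cINF_lower)
  then show "(INF z\<in>nbhd X p d. G (fst z) (snd z)) \<le> G X p" by simp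
qed

lemma upper_env_ge_center:
  assumes lb: "locbdd G" and p: "p \<noteq> 0"
  shows "G X p \<le> upper_env G X p"
  unfolding upper_env_alt
proof (rule cINF_greatest)
  show "{0<..} \<noteq> ({}::real set)" by auto
  fix d :: real assume "d \<in> {0<..}"
  then have dpos: "d > 0" by simp
  obtain M where M: "\<And>z. z \<in> nbhd X p d \<Longrightarrow> \<bar>G (fst z) (snd z)\<bar> \<le> M"
    using locbdd_nbhd[OF lb] by blast
  have "(X,p) \<in> nbhd X p d" using p dpos by (simp add: nbhd_def)
  moreover have "bdd_above ((\<lambda>z. G (fst z) (snd z)) ` nbhd X p d)"
    using M by (intro bdd_aboveI2[where M="M"]) (smt (verit))
  ultimately have "G (fst (X,p)) (snd (X,p)) \<le> (SUP z\<in>nbhd X p d. G (fst z) (snd z))"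
    by (intro cSUP_upper)
  then show "G X p \<le> (SUP z\<in>nbhd X p d. G (fst z) (snd z))" by simp
qed

lemma comp_le1: "norm (u::vec2) \<le> 1 \<Longrightarrow> \<bar>u$i\<bar> \<le> 1"
  using component_le_norm_cart[where x=u and i=i] by linarith

lemma mcomp_le: "\<bar>(Z::mat2)$i$j\<bar> \<le> norm Z"
proof -
  have "\<bar>Z$i$j\<bar> \<le> norm (Z$i)" by (rule component_le_norm_cart)
  also have "\<dots> \<le> norm Z" by (metis Finite_Cartesian_Product.norm_nth_le)
  finally show ?thesis .
qed

lemma trm_bound:
  assumes "norm u \<le> 1" shows "\<bar>trm u Z\<bar> \<le> 6 * norm Z"
proof -
  have u1: "\<bar>u$1\<bar> \<le> 1" and u2: "\<bar>u$2\<bar> \<le> 1" using comp_le1[OF assms] by auto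
  have b: "\<bar>u$i*u$j*Z$k$l\<bar> \<le> norm Z" for i j k l
  proof -
    have "\<bar>u$i*u$j\<bar> \<le> 1" using comp_le1[OF assms, of i] comp_le1[OF assms, of j]
      by (simp add: abs_mult mult_le_one)
    then have "\<bar>u$i*u$j\<bar> * \<bar>Z$k$l\<bar> \<le> 1 * norm Z"
      using mcomp_le[of Z k l] by (intro mult_mono) auto
    then show ?thesis by (simp add: abs_mult)
  qed
  show ?thesis unfolding trm_expl
    using b[of 1 1 1 1] b[of 1 2 2 1] b[of 2 1 1 2] b[of 2 2 2 2] mcomp_le[of Z 1 1] mcomp_le[of Z 2 2]
    by (simp add: abs_le_iff)
qed

lemma trm_add: "trm u (Y + Z) = trm u Y + trm u Z"
  by (simp add: trm_expl algebra_simps)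
lemma trm_diff: "trm u (Y - Z) = trm u Y - trm u Z"
  by (simp add: trm_expl algebra_simps)
lemma trm_scale: "trm u (c *\<^sub>R Z) = c * trm u Z"
  by (simp add: trm_expl algebra_simps)

lemma trm_id: "norm u = 1 \<Longrightarrow> trm u (mat 1) = 1"
  using norm2sq[of u] by (simp add: trm_expl mat_def power2_eq_square)

lemma norm_unitv: "q \<noteq> 0 \<Longrightarrow> norm (unitv q) = 1"
  by (simp add: unitv_def)

lemma Fop_eq: "Fop X q y = - trm (unitv q) X - norm q"
  by (simp add: Fop_def trm_def cfun_def)

lemma Feps_eq: "Feps e X q x = - e * trm (unitv q) X - norm q"
  by (simp add: Feps_def Fop_eq trm_scale)

lemma trm_outer_par:
  assumes "x \<noteq> 0" and "c \<noteq> 0"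
  shows "trm (unitv (c *\<^sub>R x)) (outer x x) = 0"
proof -
  have n: "(norm x)^2 = x$1^2 + x$2^2" by (rule norm2sq)
  have nx: "norm x \<noteq> 0" using assms by simp
  have u: "unitv (c *\<^sub>R x) = (sgn c / norm x) *\<^sub>R x"
    using assms by (simp add: unitv_def abs_sgn divide_simps sgn_if)
  have "trm ((sgn c / norm x) *\<^sub>R x) (outer x x) = (x$1^2 + x$2^2) - (x$1^2 + x$2^2)^2 / (norm x)^2"
    using assms by (simp add: trm_expl outer_def power2_eq_square sgn_if field_simps)
  also have "\<dots> = 0" using n nx by (simp add: power2_eq_square)
  finally show ?thesis using u by simp
qed

lemma trm_radial:
  assumes "x \<noteq> 0" and "a \<noteq> 0"
  shows "trm (unitv ((2*a) *\<^sub>R x)) ((2*a) *\<^sub>R mat 1 + (4*b) *\<^sub>R outer x x) = 2*a"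
proof -
  have "norm (unitv ((2*a) *\<^sub>R x)) = 1" using assms by (intro norm_unitv) simp
  then show ?thesis using trm_outer_par[of x "2*a"] assms
    by (simp add: trm_add trm_scale trm_id)
qed

definition perp :: "vec2 \<Rightarrow> vec2" where
  "perp u = (\<chi> i. if i = 1 then - u$2 else u$1)"

lemma perp_c: "perp u $ 1 = - u$2" "perp u $ 2 = u$1"
  by (simp_all add: perp_def)

lemma trm_perp:
  assumes "norm u = 1" shows "trm u Z = perp u \<bullet> (Z *v perp u)"
proof -
  have n: "u$1^2 + u$2^2 = 1" using norm2sq[of u] assms by simp
  have "trm u Z = Z$1$1 * (u$1^2 + u$2^2) + Z$2$2*(u$1^2 + u$2^2) - (u$1*u$1*Z$1$1 + u$1*u$2*Z$2$1 + u$2*u$1*Z$1$2 + u$2*u$2*Z$2$2)"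
    using n by (simp add: trm_expl)
  also have "\<dots> = perp u \<bullet> (Z *v perp u)"
    by (simp add: inner2 mv2 perp_c power2_eq_square algebra_simps)
  finally show ?thesis .
qed

lemma trm_cont:
  assumes "p \<noteq> 0"
  shows "isCont (\<lambda>z. trm (unitv (snd z)) (fst z)) (X,p)"
proof -
  have e: "(\<lambda>z. trm (unitv (snd z)) (fst z)) = (\<lambda>z::mat2\<times>vec2.
     fst z$1$1 + fst z$2$2 - ((snd z$1/norm (snd z))*(snd z$1/norm (snd z))*fst z$1$1
     + (snd z$1/norm (snd z))*(snd z$2/norm (snd z))*fst z$2$1
     + (snd z$2/norm (snd z))*(snd z$1/norm (snd z))*fst z$1$2
     + (snd z$2/norm (snd z))*(snd z$2/norm (snd z))*fst z$2$2))"
    by (rule ext) (simp add: trm_expl unitv_def divide_inverse mult.commute)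
  show ?thesis unfolding e using assms
    by (intro continuous_intros) auto
qed

lemma neg_mv: "(- (A::mat2)) *v x = - (A *v x)"
  by (simp add: vec2_eq mv2)

lemma mv_scale: "(A::mat2) *v (c *\<^sub>R h) = c *\<^sub>R (A *v h)"
  by (simp add: vec2_eq mv2 algebra_simps)

lemma C2_neg: "C2_test \<phi> D\<phi> D2\<phi> \<Longrightarrow> C2_test (\<lambda>y. - \<phi> y) (\<lambda>y. - D\<phi> y) (\<lambda>y. - D2\<phi> y)"
  unfolding C2_test_def
proof (intro conjI allI)
  assume a: "continuous_on UNIV D2\<phi> \<and> (\<forall>y. (\<phi> has_derivative (\<lambda>h. D\<phi> y \<bullet> h)) (at y)) \<and>
    (\<forall>y. (D\<phi> has_derivative (\<lambda>h. D2\<phi> y *v h)) (at y))"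
  show "continuous_on UNIV (\<lambda>y. - D2\<phi> y)" using a by (intro continuous_intros) auto
  fix y
  show "((\<lambda>y. - \<phi> y) has_derivative (\<lambda>h. - D\<phi> y \<bullet> h)) (at y)"
    using has_derivative_minus[OF a[THEN conjunct2, THEN conjunct1, rule_format, of y]] by simp
  show "((\<lambda>y. - D\<phi> y) has_derivative (\<lambda>h. - D2\<phi> y *v h)) (at y)"
    using has_derivative_minus[OF a[THEN conjunct2, THEN conjunct2, rule_format, of y]] by (simp add: neg_mv)
qed

lemma C2_min:
  assumes C: "C2_test \<phi> D\<phi> D2\<phi>" and r: "r > 0" and mn: "\<forall>w\<in>ball y r. \<phi> y \<le> \<phi> w"
  shows "D\<phi> y = 0" "\<And>h. 0 \<le> h \<bullet> (D2\<phi> y *v h)"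
proof -
  have d1: "\<And>z. (\<phi> has_derivative (\<lambda>h. D\<phi> z \<bullet> h)) (at z)" and d2: "\<And>z. (D\<phi> has_derivative (\<lambda>h. D2\<phi> z *v h)) (at z)"
    using C unfolding C2_test_def by auto
  have gd: "((\<lambda>s. \<phi> (y + s *\<^sub>R h)) has_real_derivative (D\<phi> (y + s *\<^sub>R h) \<bullet> h)) (at s)" for h :: vec2 and s :: real
  proof -
    have "((\<lambda>s. y + s *\<^sub>R h) has_derivative (\<lambda>d. d *\<^sub>R h)) (at s)"
      by (auto intro!: derivative_eq_intros)
    from has_derivative_compose[OF this d1]
    have "((\<lambda>s. \<phi> (y + s *\<^sub>R h)) has_derivative (\<lambda>d. D\<phi> (y + s *\<^sub>R h) \<bullet> (d *\<^sub>R h))) (at s)" .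
    then show ?thesis by (rule has_derivative_imp_has_field_derivative) simp
  qed
  have gd2: "((\<lambda>s. D\<phi> (y + s *\<^sub>R h) \<bullet> h) has_real_derivative ((D2\<phi> (y + s *\<^sub>R h) *v h) \<bullet> h)) (at s)" for h :: vec2 and s :: real
  proof -
    have "((\<lambda>s. y + s *\<^sub>R h) has_derivative (\<lambda>d. d *\<^sub>R h)) (at s)"
      by (auto intro!: derivative_eq_intros)
    from has_derivative_inner_left[OF has_derivative_compose[OF this d2], of h]
    have "((\<lambda>s. D\<phi> (y + s *\<^sub>R h) \<bullet> h) has_derivative (\<lambda>d. (D2\<phi> (y + s *\<^sub>R h) *v (d *\<^sub>R h)) \<bullet> h)) (at s)" .
    then show ?thesis by (rule has_derivative_imp_has_field_derivative) (simp add: mv_scale)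
  qed
  have lm: "\<forall>s. \<bar>0 - s\<bar> < r / (norm h + 1) \<longrightarrow> \<phi> (y + 0 *\<^sub>R h) \<le> \<phi> (y + s *\<^sub>R h)" for h :: vec2
  proof (intro allI impI)
    fix s assume s: "\<bar>0 - s\<bar> < r / (norm h + 1)"
    have "\<bar>s\<bar> * norm h \<le> \<bar>s\<bar> * (norm h + 1)" by (simp add: mult_left_mono)
    also have "\<dots> < r"
    proof -
      have np: "norm h + 1 > 0" using norm_ge_zero[of h] by linarith
      have "\<bar>s\<bar> * (norm h + 1) < r / (norm h + 1) * (norm h + 1)"
        using mult_strict_right_mono[OF s np] by simp
      then show ?thesis using np by simp
    qed
    finally have "y + s *\<^sub>R h \<in> ball y r" by (simp add: dist_norm)
    then show "\<phi> (y + 0 *\<^sub>R h) \<le> \<phi> (y + s *\<^sub>R h)" using mn by simp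
  qed
  have rp: "r / (norm h + 1) > 0" for h :: vec2
  proof -
    have "norm h + 1 > 0" using norm_ge_zero[of h] by linarith
    then show ?thesis using r by simp
  qed
  have z: "D\<phi> y \<bullet> h = 0" for h :: vec2
    using DERIV_local_min[OF gd[of h 0] rp lm] by simp
  show "D\<phi> y = 0" using z[of "D\<phi> y"] by simp
  show "0 \<le> h \<bullet> (D2\<phi> y *v h)" for h :: vec2
  proof (rule ccontr)
    assume "\<not> 0 \<le> h \<bullet> (D2\<phi> y *v h)"
    then have k: "(D2\<phi> (y + 0 *\<^sub>R h) *v h) \<bullet> h < 0" by (simp add: inner_commute)
    obtain d where d: "d > 0" and dd: "\<And>e. e > 0 \<Longrightarrow> e < d \<Longrightarrow> D\<phi> (y + (0 + e) *\<^sub>R h) \<bullet> h < D\<phi> (y + 0 *\<^sub>R h) \<bullet> h"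
      using DERIV_neg_dec_right[OF gd2[of h 0] k] by blast
    obtain R' where R': "R' = r / (norm h + 1)" "R' > 0" using rp[of h] by blast
    define s1 where "s1 = min d R' / 2"
    have s1': "s1 > 0" "s1 < d" "s1 < R'" using d R'(2) unfolding s1_def by auto
    have s1: "s1 > 0" "s1 < d" "s1 < r / (norm h + 1)" using s1' R'(1) by auto
    have "\<phi> (y + s1 *\<^sub>R h) < \<phi> (y + 0 *\<^sub>R h)"
    proof (rule DERIV_neg_imp_decreasing_open[where f="\<lambda>s. \<phi> (y + s *\<^sub>R h)", OF s1(1)])
      fix x assume "0 < x" "x < s1"
      then have "D\<phi> (y + x *\<^sub>R h) \<bullet> h < 0" using dd[of x] s1 z[of h] by simp
      then show "\<exists>l. ((\<lambda>s. \<phi> (y + s *\<^sub>R h)) has_real_derivative l) (at x) \<and> l < 0"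
        using gd by blast
    next
      show "continuous_on {0..s1} (\<lambda>s. \<phi> (y + s *\<^sub>R h))"
        using gd by (intro continuous_at_imp_continuous_on ballI DERIV_isCont) blast
    qed
    moreover have "\<phi> (y + 0 *\<^sub>R h) \<le> \<phi> (y + s1 *\<^sub>R h)" using lm[of h] s1 by simp
    ultimately show False by simp
  qed
qed

lemma C2_max:
  assumes C: "C2_test \<phi> D\<phi> D2\<phi>" and r: "r > 0" and mx: "\<forall>w\<in>ball y r. \<phi> w \<le> \<phi> y"
  shows "D\<phi> y = 0" "\<And>h. h \<bullet> (D2\<phi> y *v h) \<le> 0"
proof -
  have m: "\<forall>w\<in>ball y r. - \<phi> y \<le> - \<phi> w" using mx by auto
  show "D\<phi> y = 0" using C2_min(1)[OF C2_neg[OF C] r m] by simp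
  show "h \<bullet> (D2\<phi> y *v h) \<le> 0" for h :: vec2 using C2_min(2)[OF C2_neg[OF C] r m, of h]
    by (simp add: neg_mv)
qed

lemma locbdd_Fop: fixes y :: vec2 shows "locbdd (\<lambda>X q. Fop X q y)"
  unfolding locbdd_def
proof
  fix R show "\<exists>M. \<forall>Y q. norm Y \<le> R \<longrightarrow> norm q \<le> R \<longrightarrow> q \<noteq> 0 \<longrightarrow> \<bar>Fop Y q y\<bar> \<le> M"
  proof (intro exI allI impI)
    fix Y :: mat2 and q :: vec2 assume a: "norm Y \<le> R" "norm q \<le> R" "q \<noteq> 0"
    have "\<bar>trm (unitv q) Y\<bar> \<le> 6 * norm Y" using trm_bound norm_unitv a by simp
    then show "\<bar>Fop Y q y\<bar> \<le> 7 * R" using a norm_ge_zero[of q] norm_ge_zero[of Y]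
      unfolding Fop_eq abs_le_iff by linarith
  qed
qed

lemma per_nat: "periodic2 v \<Longrightarrow> v (y + real n *\<^sub>R axis i 1) = v y"
proof (induction n arbitrary: y)
  case 0 then show ?case by simp
next
  case (Suc n)
  have "v (y + real (Suc n) *\<^sub>R axis i 1) = v ((y + real n *\<^sub>R axis i 1) + axis i 1)"
    by (simp add: algebra_simps)
  also have "\<dots> = v (y + real n *\<^sub>R axis i 1)" using Suc.prems unfolding periodic2_def by blast
  finally show ?case using Suc by simp
qed

lemma per_int: assumes "periodic2 v" shows "v (y + of_int k *\<^sub>R axis i 1) = v y"
proof (cases "k \<ge> 0")
  case True
  define n where "n = nat k"
  have "k = int n" using True by (simp add: n_def)
  then show ?thesis using per_nat[OF assms] by simp
next
  case False
  define n where "n = nat (- k)"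
  have n: "k = - int n" using False by (simp add: n_def)
  have "v y = v ((y + of_int k *\<^sub>R axis i 1) + real n *\<^sub>R axis i 1)" using n by simp
  also have "\<dots> = v (y + of_int k *\<^sub>R axis i 1)" by (rule per_nat[OF assms])
  finally show ?thesis by simp
qed

lemma per_max:
  assumes c: "continuous_on UNIV v" and p: "periodic2 v"
  shows "\<exists>y0. \<forall>y. v y \<le> v y0"
proof -
  have "\<exists>x\<in>cbox (0::vec2) 1. \<forall>y\<in>cbox 0 1. v y \<le> v x"
  proof (rule continuous_attains_sup)
    have "(0::vec2) \<in> cbox 0 1" by (simp add: mem_box_cart)
    then show "cbox (0::vec2) 1 \<noteq> {}" by blast
  qed (auto intro: continuous_on_subset[OF c])
  then obtain x where x: "\<forall>y\<in>cbox 0 1. v y \<le> v x" by blast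
  show ?thesis
  proof (intro exI allI)
    fix y :: vec2
    define z where "z = (y + of_int (- \<lfloor>y$1\<rfloor>) *\<^sub>R axis 1 1) + of_int (- \<lfloor>y$2\<rfloor>) *\<^sub>R axis 2 1"
    have "v z = v (y + of_int (- \<lfloor>y$1\<rfloor>) *\<^sub>R axis 1 1)" unfolding z_def by (rule per_int[OF p])
    also have "\<dots> = v y" by (rule per_int[OF p])
    finally have "v z = v y" .
    moreover have "z \<in> cbox 0 1"
      unfolding mem_box_cart forall_2 z_def
      by (simp add: axis_def) linarith
    ultimately show "v y \<le> v x" using x by metis
  qed
qed

lemma C2_const: "C2_test (\<lambda>_. c) (\<lambda>_. 0) (\<lambda>_. 0)"
proof -
  have e1: "(\<lambda>h::vec2. (0::vec2) \<bullet> h) = (\<lambda>h. 0)" by auto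
  have e2: "(\<lambda>h::vec2. (0::mat2) *v h) = (\<lambda>h. 0)" by (auto simp: matrix_vector_mult_0)
  show ?thesis unfolding C2_test_def e1 e2 by (auto intro: has_derivative_const)
qed

lemma Fbar_unit:
  assumes np: "norm p = 1"
  shows "Fbar p = -1"
  unfolding Fbar_def
proof (rule the_equality)
  have p0: "p \<noteq> 0" using np by auto
  have up: "norm (unitv p) = 1" using norm_unitv[OF p0] .
  show "\<exists>v. continuous_on UNIV v \<and> periodic2 v \<and> cell_sub Fop p (- 1) v \<and> cell_super Fop p (- 1) v"
  proof (intro exI conjI)
    show "continuous_on UNIV (\<lambda>_. 0::real)" by simp
    show "periodic2 (\<lambda>_. 0::real)" by (simp add: periodic2_def)
    show "cell_sub Fop p (- 1) (\<lambda>_. 0)"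
      unfolding cell_sub_def
    proof (intro allI impI)
      fix \<phi> D\<phi> D2\<phi> y assume C: "C2_test \<phi> D\<phi> D2\<phi>" and "\<exists>r>0. \<forall>w\<in>ball y r. 0 - \<phi> w \<le> 0 - \<phi> y"
      then obtain r where r: "r > 0" "\<forall>w\<in>ball y r. \<phi> y \<le> \<phi> w" by auto
      have D0: "D\<phi> y = 0" and psd: "\<And>h. 0 \<le> h \<bullet> (D2\<phi> y *v h)" using C2_min[OF C r] by auto
      have "lower_env (\<lambda>X q. Fop X q y) (D2\<phi> y) (p + D\<phi> y) \<le> Fop (D2\<phi> y) p y"
        using lower_env_le_center[OF locbdd_Fop p0] D0 by simp
      also have "\<dots> \<le> -1" using psd[of "perp (unitv p)"] np by (simp add: Fop_eq trm_perp[OF up])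
      finally show "lower_env (\<lambda>X q. Fop X q y) (D2\<phi> y) (p + D\<phi> y) \<le> - 1" .
    qed
    show "cell_super Fop p (- 1) (\<lambda>_. 0)"
      unfolding cell_super_def
    proof (intro allI impI)
      fix \<phi> D\<phi> D2\<phi> y assume C: "C2_test \<phi> D\<phi> D2\<phi>" and "\<exists>r>0. \<forall>w\<in>ball y r. 0 - \<phi> y \<le> 0 - \<phi> w"
      then obtain r where r: "r > 0" "\<forall>w\<in>ball y r. \<phi> w \<le> \<phi> y" by auto
      have D0: "D\<phi> y = 0" and nsd: "\<And>h. h \<bullet> (D2\<phi> y *v h) \<le> 0" using C2_max[OF C r] by auto
      have "-1 \<le> Fop (D2\<phi> y) p y" using nsd[of "perp (unitv p)"] np by (simp add: Fop_eq trm_perp[OF up])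
      also have "\<dots> \<le> upper_env (\<lambda>X q. Fop X q y) (D2\<phi> y) (p + D\<phi> y)"
        using upper_env_ge_center[OF locbdd_Fop p0] D0 by simp
      finally show "- 1 \<le> upper_env (\<lambda>X q. Fop X q y) (D2\<phi> y) (p + D\<phi> y)" .
    qed
  qed
next
  fix lam assume "\<exists>v. continuous_on UNIV v \<and> periodic2 v \<and> cell_sub Fop p lam v \<and> cell_super Fop p lam v"
  then obtain v where c: "continuous_on UNIV v" and per: "periodic2 v"
    and sub: "cell_sub Fop p lam v" and sup: "cell_super Fop p lam v" by blast
  obtain y0 where y0: "\<And>y. v y \<le> v y0" using per_max[OF c per] by blast
  have "periodic2 (\<lambda>y. - v y)" using per by (simp add: periodic2_def)
  moreover have "continuous_on UNIV (\<lambda>y. - v y)" using c by (intro continuous_intros)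
  ultimately obtain y1 where y1: "\<And>y. - v y \<le> - v y1" using per_max by blast
  have ex0: "\<exists>r>0. \<forall>w\<in>ball y0 r. v w - (\<lambda>_. 0) w \<le> v y0 - (\<lambda>_. 0) y0"
    using y0 by (intro exI[of _ 1]) auto
  have le1: "lower_env (\<lambda>X q. Fop X q y0) 0 p \<le> lam"
    using sub[unfolded cell_sub_def, rule_format, OF C2_const[of 0] ex0] by simp
  have ex1: "\<exists>r>0. \<forall>w\<in>ball y1 r. v w - (\<lambda>_. 0) w \<ge> v y1 - (\<lambda>_. 0) y1"
    using y1 by (intro exI[of _ 1]) auto
  have ge1: "lam \<le> upper_env (\<lambda>X q. Fop X q y1) 0 p"
    using sup[unfolded cell_super_def, rule_format, OF C2_const[of 0] ex1] by simp
  have A: "-1 - 7*d \<le> lam" if d: "0 < d" "d \<le> 1" for d :: real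
  proof -
    have "-1 - 7*d \<le> lower_env (\<lambda>X q. Fop X q y0) 0 p"
    proof (rule lower_env_ge[OF locbdd_Fop d(1)])
      fix Y q assume a: "dist (Y,q) (0::mat2,p) < d" "q \<noteq> 0"
      have "dist Y 0 < d" "dist q p < d"
        using a dist_fst_le[of "(Y,q)" "(0::mat2,p)"] dist_snd_le[of "(Y,q)" "(0::mat2,p)"] by auto
      then have nY: "norm Y < d" and nq: "norm q < 1 + d"
        using norm_triangle_ineq2[of q p] np by (auto simp: dist_norm)
      have "\<bar>trm (unitv q) Y\<bar> \<le> 6 * norm Y" using trm_bound norm_unitv a by simp
      then show "-1 - 7*d \<le> Fop Y q y0" using nY nq unfolding Fop_eq by (simp add: abs_le_iff)
    qed
    then show ?thesis using le1 by linarith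
  qed
  have B: "lam \<le> -1 + 7*d" if d: "0 < d" "d \<le> 1" for d :: real
  proof -
    have "upper_env (\<lambda>X q. Fop X q y1) 0 p \<le> -1 + 7*d"
    proof (rule upper_env_le[OF locbdd_Fop d(1)])
      fix Y q assume a: "dist (Y,q) (0::mat2,p) < d" "q \<noteq> 0"
      have "dist Y 0 < d" "dist q p < d"
        using a dist_fst_le[of "(Y,q)" "(0::mat2,p)"] dist_snd_le[of "(Y,q)" "(0::mat2,p)"] by auto
      then have nY: "norm Y < d" and nq: "1 - d < norm q"
        using norm_triangle_ineq2[of p q] np by (auto simp: dist_norm norm_minus_commute)
      have "\<bar>trm (unitv q) Y\<bar> \<le> 6 * norm Y" using trm_bound norm_unitv a by simp
      then show "Fop Y q y1 \<le> -1 + 7*d" using nY nq unfolding Fop_eq by (simp add: abs_le_iff)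
    qed
    then show ?thesis using ge1 by linarith
  qed
  show "lam = -1"
  proof (rule ccontr)
    assume ne: "lam \<noteq> -1"
    define d where "d = min 1 (\<bar>lam + 1\<bar> / 14)"
    have d1: "0 < d" using ne by (simp add: d_def)
    have d2: "d \<le> 1" "d \<le> \<bar>lam + 1\<bar> / 14" unfolding d_def by (rule min.cobounded1, rule min.cobounded2)
    have "\<bar>lam + 1\<bar> \<le> 7*d" using A[OF d1 d2(1)] B[OF d1 d2(1)] by (simp add: abs_le_iff)
    moreover have "14 * d \<le> \<bar>lam + 1\<bar>" using d2(2) by (simp add: le_divide_eq)
    ultimately have "\<bar>lam + 1\<bar> \<le> 0" by linarith
    then show False using ne by simp
  qed
qed

lemma cont_comp_q:
  assumes c: "continuous_on ({0..} \<times> UNIV) (\<lambda>w. B (fst w) (snd w))"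
  shows "continuous_on UNIV (\<lambda>z::vec2\<times>real. B (fst z \<bullet> fst z) (snd z))"
proof -
  have "continuous_on UNIV (\<lambda>z::vec2\<times>real. (fst z \<bullet> fst z, snd z))"
    by (intro continuous_intros)
  moreover have "(\<lambda>z::vec2\<times>real. (fst z \<bullet> fst z, snd z)) ` UNIV \<subseteq> {0..} \<times> UNIV" by auto
  ultimately show ?thesis using continuous_on_compose2[OF c] by fastforce
qed

lemma outer_cont: "continuous_on UNIV (\<lambda>z::vec2\<times>real. outer (fst z) (fst z))"
  unfolding outer_def
  by (intro continuous_on_vec_lambda continuous_intros)

lemma radial_C21:
  fixes A Aq Aqq As :: "real \<Rightarrow> real \<Rightarrow> real"
  assumes dq: "\<And>q s. q \<ge> 0 \<Longrightarrow> ((\<lambda>q. A q s) has_real_derivative Aq q s) (at q)"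
    and dqq: "\<And>q s. q \<ge> 0 \<Longrightarrow> ((\<lambda>q. Aq q s) has_real_derivative Aqq q s) (at q)"
    and ds: "\<And>q s. q \<ge> 0 \<Longrightarrow> ((\<lambda>s. A q s) has_real_derivative As q s) (at s)"
    and cs: "continuous_on ({0..} \<times> UNIV) (\<lambda>w. As (fst w) (snd w))"
    and cq: "continuous_on ({0..} \<times> UNIV) (\<lambda>w. Aq (fst w) (snd w))"
    and cqq: "continuous_on ({0..} \<times> UNIV) (\<lambda>w. Aqq (fst w) (snd w))"
  shows "C21_test (\<lambda>z. A (fst z \<bullet> fst z) (snd z)) (\<lambda>z. As (fst z \<bullet> fst z) (snd z))
     (\<lambda>z. (2 * Aq (fst z \<bullet> fst z) (snd z)) *\<^sub>R fst z)
     (\<lambda>z. (2 * Aq (fst z \<bullet> fst z) (snd z)) *\<^sub>R mat 1 + (4 * Aqq (fst z \<bullet> fst z) (snd z)) *\<^sub>R outer (fst z) (fst z))"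
  unfolding C21_test_def
proof (intro conjI allI)
  show "continuous_on UNIV (\<lambda>z::vec2\<times>real. As (fst z \<bullet> fst z) (snd z))" using cont_comp_q[OF cs] by this
  have c1: "continuous_on UNIV (\<lambda>z::vec2\<times>real. Aq (fst z \<bullet> fst z) (snd z))" by (rule cont_comp_q[OF cq])
  have c2: "continuous_on UNIV (\<lambda>z::vec2\<times>real. Aqq (fst z \<bullet> fst z) (snd z))" by (rule cont_comp_q[OF cqq])
  show "continuous_on UNIV (\<lambda>z::vec2\<times>real. (2 * Aq (fst z \<bullet> fst z) (snd z)) *\<^sub>R fst z)"
    using c1 by (intro continuous_intros)
  show "continuous_on UNIV (\<lambda>z::vec2\<times>real. (2 * Aq (fst z \<bullet> fst z) (snd z)) *\<^sub>R mat 1 + (4 * Aqq (fst z \<bullet> fst z) (snd z)) *\<^sub>R outer (fst z) (fst z))"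
    using c1 c2 outer_cont by (intro continuous_intros)
  fix x :: vec2 and t :: real
  show "((\<lambda>s. A (fst (x, s) \<bullet> fst (x, s)) (snd (x, s))) has_real_derivative As (fst (x, t) \<bullet> fst (x, t)) (snd (x, t))) (at t)"
    using ds[of "x \<bullet> x" t] by simp
  have ip: "((\<lambda>y::vec2. y \<bullet> y) has_derivative (\<lambda>h. x \<bullet> h + h \<bullet> x)) (at x)"
    by (rule has_derivative_inner[OF has_derivative_ident has_derivative_ident])
  have a1: "((\<lambda>q. A q t) has_derivative (*) (Aq (x \<bullet> x) t)) (at (x \<bullet> x))"
    using has_field_derivative_imp_has_derivative[OF dq[of "x \<bullet> x" t]] by simp
  have "((\<lambda>y. A (y \<bullet> y) t) has_derivative (\<lambda>h. Aq (x \<bullet> x) t * (x \<bullet> h + h \<bullet> x))) (at x)"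
    using has_derivative_compose[OF ip a1] by simp
  then have "((\<lambda>y. A (y \<bullet> y) t) has_derivative
          (\<lambda>h. (2 * Aq (x \<bullet> x) t) *\<^sub>R x \<bullet> h)) (at x)"
    by (rule has_derivative_eq_rhs) (auto simp: inner_commute algebra_simps)
  then show "((\<lambda>y. A (fst (y, t) \<bullet> fst (y, t)) (snd (y, t))) has_derivative
          (\<lambda>h. (2 * Aq (fst (x, t) \<bullet> fst (x, t)) (snd (x, t))) *\<^sub>R fst (x, t) \<bullet> h)) (at x)"
    by simp
  have a2: "((\<lambda>q. Aq q t) has_derivative (*) (Aqq (x \<bullet> x) t)) (at (x \<bullet> x))"
    using has_field_derivative_imp_has_derivative[OF dqq[of "x \<bullet> x" t]] by simp
  have f: "((\<lambda>y. 2 * Aq (y \<bullet> y) t) has_derivative (\<lambda>h. 2 * (Aqq (x \<bullet> x) t * (x \<bullet> h + h \<bullet> x)))) (at x)"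
    using has_derivative_mult_right[OF has_derivative_compose[OF ip a2], of 2] by simp
  have "((\<lambda>y. (2 * Aq (y \<bullet> y) t) *\<^sub>R y) has_derivative
     (\<lambda>h. (2 * Aq (x \<bullet> x) t) *\<^sub>R h + (2 * (Aqq (x \<bullet> x) t * (x \<bullet> h + h \<bullet> x))) *\<^sub>R x)) (at x)"
    using has_derivative_scaleR[OF f has_derivative_ident] by simp
  then have "((\<lambda>y. (2 * Aq (y \<bullet> y) t) *\<^sub>R y) has_derivative
          (\<lambda>h. ((2 * Aq (x \<bullet> x) t) *\<^sub>R mat 1 +
                (4 * Aqq (x \<bullet> x) t) *\<^sub>R outer x x) *v h)) (at x)"
    by (rule has_derivative_eq_rhs)
       (auto simp: matrix_vector_mult_add_rdistrib scaleR_matrix_vector_assoc[symmetric] outer_mv inner_commute algebra_simps)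
  then show "((\<lambda>y. (2 * Aq (fst (y, t) \<bullet> fst (y, t)) (snd (y, t))) *\<^sub>R fst (y, t)) has_derivative
          (\<lambda>h. ((2 * Aq (fst (x, t) \<bullet> fst (x, t)) (snd (x, t))) *\<^sub>R mat 1 +
                (4 * Aqq (fst (x, t) \<bullet> fst (x, t)) (snd (x, t))) *\<^sub>R outer (fst (x, t)) (fst (x, t))) *v h)) (at x)"
    by simp
qed

lemma ucont_bound:
  fixes v :: "vec2 \<times> real \<Rightarrow> real" and T :: real
  assumes uc: "uniformly_continuous_on (UNIV \<times> {0..T}) v" and T: "T \<ge> 0"
  shows "\<exists>C. \<forall>x s. 0 \<le> s \<and> s \<le> T \<longrightarrow> \<bar>v (x,s) - v (x,0)\<bar> \<le> C"
proof -
  obtain d where d: "d > 0" and dd: "\<And>z z'. z \<in> UNIV \<times> {0..T} \<Longrightarrow> z' \<in> UNIV \<times> {0..T} \<Longrightarrow> dist z' z < d \<Longrightarrow> dist (v z') (v z) < 1"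
    using uc unfolding uniformly_continuous_on_def by (meson zero_less_one)
  have step: "\<forall>s. 0 \<le> s \<and> s \<le> T \<and> s \<le> real n * (d/2) \<longrightarrow> \<bar>v (x,s) - v (x,0)\<bar> \<le> real n" for n x
  proof (induction n)
    case 0 then show ?case by auto
  next
    case (Suc n)
    show ?case
    proof (intro allI impI)
      fix s assume s: "0 \<le> s \<and> s \<le> T \<and> s \<le> real (Suc n) * (d/2)"
      define s' where "s' = max 0 (s - d/2)"
      have s': "0 \<le> s'" "s' \<le> T" "s' \<le> real n * (d/2)" "\<bar>s - s'\<bar> < d"
        using s d mult_nonneg_nonneg[of d "real n"] by (auto simp: s'_def algebra_simps split: split_max)
      have "dist (x,s) (x,s') < d" using s'(4) by (simp add: dist_Pair_Pair dist_real_def)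
      then have "dist (v (x,s)) (v (x,s')) < 1" using dd[of "(x,s')" "(x,s)"] s s' by auto
      then have "\<bar>v (x,s) - v (x,s')\<bar> < 1" by (simp add: dist_real_def)
      moreover have "\<bar>v (x,s') - v (x,0)\<bar> \<le> real n" using Suc.IH s' by blast
      ultimately show "\<bar>v (x,s) - v (x,0)\<bar> \<le> real (Suc n)" by linarith
    qed
  qed
  obtain n :: nat where n: "T / (d/2) \<le> real n" using real_arch_simple by blast
  have "T \<le> real n * (d/2)" using n d by (simp add: field_simps)
  then show ?thesis using step[of n] by (intro exI[of _ "real n"]) auto
qed

lemma comp_sub:
  assumes sub: "par_sub G v" and vc: "continuous_on (UNIV \<times> {0..}) v"
    and C: "C21_test \<psi> \<psi>t D\<psi> D2\<psi>" and \<psi>c: "continuous_on UNIV \<psi>"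
    and T: "T > 0"
    and strict: "\<And>x s. 0 < s \<Longrightarrow> s < T \<Longrightarrow> \<psi>t (x,s) + lower_env (\<lambda>X q. G X q x) (D2\<psi> (x,s)) (D\<psi> (x,s)) > 0"
    and init: "\<And>x. v (x,0) \<le> \<psi> (x,0)"
    and hT: "\<And>x. v (x,T) \<le> \<psi> (x,T)"
    and far: "\<And>x s. R \<le> norm x \<Longrightarrow> 0 \<le> s \<Longrightarrow> s \<le> T \<Longrightarrow> v (x,s) \<le> \<psi> (x,s)"
    and s1: "0 \<le> s1" "s1 \<le> T"
  shows "v (x1,s1) \<le> \<psi> (x1,s1)"
proof (rule ccontr)
  assume neg: "\<not> v (x1,s1) \<le> \<psi> (x1,s1)"
  let ?K = "cball (0::vec2) R \<times> {0..T}"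
  let ?f = "\<lambda>z. v z - \<psi> z"
  have Kc: "compact ?K" by (intro compact_Times compact_cball compact_Icc)
  have x1: "norm x1 < R" using far[of x1 s1] neg s1 by force
  have inK: "(x1,s1) \<in> ?K" using x1 s1 by auto
  have fc: "continuous_on ?K ?f"
    by (intro continuous_intros continuous_on_subset[OF vc] continuous_on_subset[OF \<psi>c]) auto
  obtain z0 where z0: "z0 \<in> ?K" and mx: "\<And>z. z \<in> ?K \<Longrightarrow> ?f z \<le> ?f z0"
    using continuous_attains_sup[OF Kc _ fc] inK by blast
  obtain x0 s0 where zz: "z0 = (x0,s0)" by (cases z0)
  have pos: "?f z0 > 0" using mx[OF inK] neg by simp
  have "s0 \<noteq> 0" using init[of x0] pos zz by auto
  moreover have "s0 \<noteq> T" using hT[of x0] pos zz by auto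
  moreover have "norm x0 < R" using far[of x0 s0] pos zz z0 by force
  ultimately have s0: "0 < s0" "s0 < T" and nx0: "norm x0 < R" using z0 zz by auto
  define r where "r = min (min s0 (T - s0)) (R - norm x0)"
  have r: "r > 0" using s0 nx0 by (simp add: r_def)
  have loc: "\<forall>w\<in>ball (x0,s0) r. v w - \<psi> w \<le> v (x0,s0) - \<psi> (x0,s0)"
  proof
    fix w assume w: "w \<in> ball (x0,s0) r"
    obtain y \<tau> where ww: "w = (y,\<tau>)" by (cases w)
    have "dist x0 y \<le> dist (x0,s0) w" "dist s0 \<tau> \<le> dist (x0,s0) w"
      using dist_fst_le[of "(x0,s0)" w] dist_snd_le[of "(x0,s0)" w] ww by auto
    then have "dist x0 y < r" "dist s0 \<tau> < r" using w by auto
    then have "norm y < R" "0 \<le> \<tau>" "\<tau> \<le> T"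
      using norm_triangle_ineq2[of y x0] unfolding r_def dist_norm dist_real_def
      by (auto simp: norm_minus_commute)
    then have "w \<in> ?K" using ww by auto
    then show "v w - \<psi> w \<le> v (x0,s0) - \<psi> (x0,s0)" using mx zz by auto
  qed
  have "\<psi>t (x0,s0) + lower_env (\<lambda>X q. G X q x0) (D2\<psi> (x0,s0)) (D\<psi> (x0,s0)) \<le> 0"
    using sub[unfolded par_sub_def, rule_format, OF C s0(1)] r loc by blast
  then show False using strict[of s0 x0, OF s0] by linarith
qed

lemma comp_super:
  assumes sup: "par_super G v" and vc: "continuous_on (UNIV \<times> {0..}) v"
    and C: "C21_test \<psi> \<psi>t D\<psi> D2\<psi>" and \<psi>c: "continuous_on UNIV \<psi>"
    and T: "T > 0"
    and strict: "\<And>x s. 0 < s \<Longrightarrow> s < T \<Longrightarrow> \<psi>t (x,s) + upper_env (\<lambda>X q. G X q x) (D2\<psi> (x,s)) (D\<psi> (x,s)) < 0"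
    and init: "\<And>x. \<psi> (x,0) \<le> v (x,0)"
    and hT: "\<And>x. \<psi> (x,T) \<le> v (x,T)"
    and far: "\<And>x s. R \<le> norm x \<Longrightarrow> 0 \<le> s \<Longrightarrow> s \<le> T \<Longrightarrow> \<psi> (x,s) \<le> v (x,s)"
    and s1: "0 \<le> s1" "s1 \<le> T"
  shows "\<psi> (x1,s1) \<le> v (x1,s1)"
proof (rule ccontr)
  assume neg: "\<not> \<psi> (x1,s1) \<le> v (x1,s1)"
  let ?K = "cball (0::vec2) R \<times> {0..T}"
  let ?f = "\<lambda>z. \<psi> z - v z"
  have Kc: "compact ?K" by (intro compact_Times compact_cball compact_Icc)
  have x1: "norm x1 < R" using far[of x1 s1] neg s1 by force
  have inK: "(x1,s1) \<in> ?K" using x1 s1 by auto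
  have fc: "continuous_on ?K ?f"
    by (intro continuous_intros continuous_on_subset[OF vc] continuous_on_subset[OF \<psi>c]) auto
  obtain z0 where z0: "z0 \<in> ?K" and mx: "\<And>z. z \<in> ?K \<Longrightarrow> ?f z \<le> ?f z0"
    using continuous_attains_sup[OF Kc _ fc] inK by blast
  obtain x0 s0 where zz: "z0 = (x0,s0)" by (cases z0)
  have pos: "?f z0 > 0" using mx[OF inK] neg by simp
  have "s0 \<noteq> 0" using init[of x0] pos zz by auto
  moreover have "s0 \<noteq> T" using hT[of x0] pos zz by auto
  moreover have "norm x0 < R" using far[of x0 s0] pos zz z0 by force
  ultimately have s0: "0 < s0" "s0 < T" and nx0: "norm x0 < R" using z0 zz by auto
  define r where "r = min (min s0 (T - s0)) (R - norm x0)"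
  have r: "r > 0" using s0 nx0 by (simp add: r_def)
  have loc: "\<forall>w\<in>ball (x0,s0) r. v w - \<psi> w \<ge> v (x0,s0) - \<psi> (x0,s0)"
  proof
    fix w assume w: "w \<in> ball (x0,s0) r"
    obtain y \<tau> where ww: "w = (y,\<tau>)" by (cases w)
    have "dist x0 y \<le> dist (x0,s0) w" "dist s0 \<tau> \<le> dist (x0,s0) w"
      using dist_fst_le[of "(x0,s0)" w] dist_snd_le[of "(x0,s0)" w] ww by auto
    then have "dist x0 y < r" "dist s0 \<tau> < r" using w by auto
    then have "norm y < R" "0 \<le> \<tau>" "\<tau> \<le> T"
      using norm_triangle_ineq2[of y x0] unfolding r_def dist_norm dist_real_def
      by (auto simp: norm_minus_commute)
    then have "w \<in> ?K" using ww by auto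
    then show "v w - \<psi> w \<ge> v (x0,s0) - \<psi> (x0,s0)" using mx zz by force
  qed
  have "\<psi>t (x0,s0) + upper_env (\<lambda>X q. G X q x0) (D2\<psi> (x0,s0)) (D\<psi> (x0,s0)) \<ge> 0"
    using sup[unfolded par_super_def, rule_format, OF C s0(1)] r loc by blast
  then show False using strict[of s0 x0, OF s0] by linarith
qed

definition G0 :: "real \<Rightarrow> real \<Rightarrow> real \<Rightarrow> real \<Rightarrow> real \<Rightarrow> real" where
  "G0 e a b c q = (q + a\<^sup>2) powr (1/2) / 2 + e / 4 * ln (q + b\<^sup>2) + c"
definition G1 :: "real \<Rightarrow> real \<Rightarrow> real \<Rightarrow> real \<Rightarrow> real" where
  "G1 e a b q = (q + a\<^sup>2) powr (-1/2) / 4 + e / (4 * (q + b\<^sup>2))"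
definition G2 :: "real \<Rightarrow> real \<Rightarrow> real \<Rightarrow> real \<Rightarrow> real" where
  "G2 e a b q = - ((q + a\<^sup>2) powr (-3/2) / 8) - e * 4 / ((4 * q + 4 * b\<^sup>2) * (4 * q + 4 * b\<^sup>2))"

lemma G0_deriv:
  assumes "a > 0" "b > 0" "q \<ge> 0"
  shows "((\<lambda>q. G0 e a b c q) has_real_derivative G1 e a b q) (at q)"
proof -
  have p1: "q + a\<^sup>2 > 0" "q + b\<^sup>2 > 0" using assms by (auto intro: add_nonneg_pos)
  have A: "((\<lambda>q. (q + a\<^sup>2) powr (1/2) / 2) has_real_derivative (q + a\<^sup>2) powr (-1/2) / 4) (at q)"
    using p1 by (auto intro!: derivative_eq_intros)
  have p3: "q * 16 + b\<^sup>2 * 16 \<noteq> 0" "4 * q + 4 * b\<^sup>2 \<noteq> 0" using p1 by auto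
  have B: "((\<lambda>q. e / 4 * ln (q + b\<^sup>2)) has_real_derivative e / (4 * (q + b\<^sup>2))) (at q)"
    using p1 p3 by (auto intro!: derivative_eq_intros simp: field_simps)
  show ?thesis unfolding G0_def G1_def
    using DERIV_add[OF DERIV_add[OF A B] DERIV_const[of c]] by simp
qed

lemma G1_deriv:
  assumes "a > 0" "b > 0" "q \<ge> 0"
  shows "((\<lambda>q. G1 e a b q) has_real_derivative G2 e a b q) (at q)"
proof -
  have p1: "q + a\<^sup>2 > 0" "q + b\<^sup>2 > 0" using assms by (auto intro: add_nonneg_pos)
  have A: "((\<lambda>q. (q + a\<^sup>2) powr (-1/2) / 4) has_real_derivative - ((q + a\<^sup>2) powr (-3/2) / 8)) (at q)"
    using p1 by (auto intro!: derivative_eq_intros)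
  have B: "((\<lambda>q. e / (4 * (q + b\<^sup>2))) has_real_derivative - (e * 4 / ((4 * q + 4 * b\<^sup>2) * (4 * q + 4 * b\<^sup>2)))) (at q)"
    using p1 by (auto intro!: derivative_eq_intros simp: power_mult_distrib)
  show ?thesis unfolding G1_def G2_def
    using DERIV_add[OF A B] by simp
qed

definition AB :: "real \<Rightarrow> real \<Rightarrow> real \<Rightarrow> real \<Rightarrow> real \<Rightarrow> real \<Rightarrow> real \<Rightarrow> real \<Rightarrow> real \<Rightarrow> real \<Rightarrow> real" where
  "AB e a b c sg K k T q s = - G0 e a b c q + sg * s + K * exp (k * (s - T))"
definition ABs :: "real \<Rightarrow> real \<Rightarrow> real \<Rightarrow> real \<Rightarrow> real \<Rightarrow> real" where
  "ABs sg K k T s = sg + K * k * exp (k * (s - T))"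

lemma B_C21:
  assumes a: "a > 0" and b: "b > 0"
  shows "C21_test (\<lambda>z. AB e a b c sg K k T (fst z \<bullet> fst z) (snd z)) (\<lambda>z. ABs sg K k T (snd z))
     (\<lambda>z. (2 * - G1 e a b (fst z \<bullet> fst z)) *\<^sub>R fst z)
     (\<lambda>z. (2 * - G1 e a b (fst z \<bullet> fst z)) *\<^sub>R mat 1 + (4 * - G2 e a b (fst z \<bullet> fst z)) *\<^sub>R outer (fst z) (fst z))"
proof (rule radial_C21[where A="AB e a b c sg K k T" and Aq="\<lambda>q s. - G1 e a b q" and Aqq="\<lambda>q s. - G2 e a b q"
      and As="\<lambda>q s. ABs sg K k T s"])
  fix q s :: real assume q: "q \<ge> 0"
  show "((\<lambda>q. AB e a b c sg K k T q s) has_real_derivative - G1 e a b q) (at q)"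
    unfolding AB_def using DERIV_add[OF DERIV_minus[OF G0_deriv[OF a b q]] DERIV_const[of "sg * s + K * exp (k * (s - T))"]]
    by (simp add: algebra_simps)
  show "((\<lambda>q. - G1 e a b q) has_real_derivative - G2 e a b q) (at q)"
    using DERIV_minus[OF G1_deriv[OF a b q]] by simp
  show "((\<lambda>s. AB e a b c sg K k T q s) has_real_derivative ABs sg K k T s) (at s)"
    unfolding AB_def ABs_def by (auto intro!: derivative_eq_intros)
next
  have pa: "\<And>w::real\<times>real. w \<in> {0..} \<times> UNIV \<Longrightarrow> 0 < fst w + a\<^sup>2" using a by (auto intro: add_nonneg_pos)
  have pb: "\<And>w::real\<times>real. w \<in> {0..} \<times> UNIV \<Longrightarrow> 0 < fst w + b\<^sup>2" using b by (auto intro: add_nonneg_pos)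
  have pb4: "\<And>w::real\<times>real. w \<in> {0..} \<times> UNIV \<Longrightarrow> 4 * fst w + 4 * b\<^sup>2 \<noteq> 0" using pb by fastforce
  show "continuous_on ({0..} \<times> UNIV) (\<lambda>w::real\<times>real. ABs sg K k T (snd w))"
    unfolding ABs_def by (intro continuous_intros)
  show "continuous_on ({0..} \<times> UNIV) (\<lambda>w::real\<times>real. - G1 e a b (fst w))"
    unfolding G1_def using pa pb by (intro continuous_intros) fastforce+
  show "continuous_on ({0..} \<times> UNIV) (\<lambda>w::real\<times>real. - G2 e a b (fst w))"
    unfolding G2_def using pa pb4 by (intro continuous_intros) fastforce+
qed

lemma powr_mhalf: "q > 0 \<Longrightarrow> q powr (-1/2) = 1 / sqrt q"
proof -
  assume q: "q > 0"
  have "q powr (-1/2) = q powr (- (1/2))" by simp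
  also have "\<dots> = 1 / q powr (1/2)" by (rule powr_minus_divide)
  also have "\<dots> = 1 / sqrt q" using q by (simp add: powr_half_sqrt)
  finally show ?thesis .
qed

lemma sq_pos: "(a::real) > 0 \<Longrightarrow> q \<ge> 0 \<Longrightarrow> q + a\<^sup>2 > 0"
  using add_nonneg_pos[of q "a\<^sup>2"] by simp

lemma G1_pos: "a > 0 \<Longrightarrow> b > 0 \<Longrightarrow> e > 0 \<Longrightarrow> q \<ge> 0 \<Longrightarrow> G1 e a b q > 0"
proof -
  assume a: "a > 0" and b: "b > 0" and e: "e > 0" and q: "q \<ge> 0"
  have h1: "(q + a\<^sup>2) powr (-1/2) / 4 > 0" using sq_pos[OF a q] by simp
  have h2: "e / (4 * (q + b\<^sup>2)) > 0" using sq_pos[OF b q] e by simp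
  show ?thesis unfolding G1_def by (rule add_pos_pos[OF h1 h2])
qed

lemma G1_bound:
  assumes a: "a > 0" and b: "b > 0" and e: "e > 0" and r: "r \<ge> 0"
  shows "2 * G1 e a b (r\<^sup>2) * (r - e) \<le> 1/2"
proof (cases "r \<le> e")
  case True
  have "G1 e a b (r\<^sup>2) * (r - e) \<le> 0"
    using G1_pos[OF a b e, of "r\<^sup>2"] True by (intro mult_nonneg_nonpos) auto
  then show ?thesis by linarith
next
  case False
  then have re: "r > e" and rp: "r > 0" using e by auto
  have P: "(r\<^sup>2 + a\<^sup>2) powr (-1/2) \<le> 1 / r"
  proof -
    have "r \<le> sqrt (r\<^sup>2 + a\<^sup>2)" using rp by (simp add: real_le_rsqrt)
    then have "1 / sqrt (r\<^sup>2 + a\<^sup>2) \<le> 1 / r" using rp by (simp add: frac_le)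
    moreover have "r\<^sup>2 + a\<^sup>2 > 0" using a by (simp add: add_nonneg_pos)
    ultimately show ?thesis using powr_mhalf[of "r\<^sup>2 + a\<^sup>2"] by simp
  qed
  have Q: "e / (4 * (r\<^sup>2 + b\<^sup>2)) \<le> e / (4 * r\<^sup>2)"
    using rp e b by (intro divide_left_mono) (auto simp: add_nonneg_pos)
  have "G1 e a b (r\<^sup>2) \<le> 1 / (4 * r) + e / (4 * r\<^sup>2)"
    unfolding G1_def using P Q by simp
  then have "2 * G1 e a b (r\<^sup>2) * (r - e) \<le> 2 * (1 / (4 * r) + e / (4 * r\<^sup>2)) * (r - e)"
    using re by (intro mult_right_mono) auto
  also have "\<dots> = (r\<^sup>2 - e\<^sup>2) / (2 * r\<^sup>2)" using rp by (simp add: field_simps power2_eq_square)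
  also have "\<dots> \<le> 1/2" using rp by (simp add: field_simps)
  finally show ?thesis .
qed

lemma ln_tangent: "(y::real) > 0 \<Longrightarrow> (M::real) > 0 \<Longrightarrow> ln y \<le> ln M + y / M - 1"
  using ln_le_minus_one[of "y / M"] by (simp add: ln_div)

lemma G0_upper:
  assumes a: "a > 0" and b: "b > 0" and e: "e > 0" and r: "r \<ge> 0" and M: "M > 0"
  shows "G0 e a b c (r\<^sup>2) \<le> r/2 + a/2 + e/2 * (ln M + (r+b)/M - 1) + c"
proof -
  have s: "(r\<^sup>2 + a\<^sup>2) powr (1/2) \<le> r + a"
  proof -
    have "(r\<^sup>2 + a\<^sup>2) powr (1/2) = sqrt (r\<^sup>2 + a\<^sup>2)" by (simp add: powr_half_sqrt)
    also have "\<dots> \<le> sqrt ((r + a)\<^sup>2)" using r a by (intro real_sqrt_le_mono) (simp add: power2_eq_square algebra_simps)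
    also have "\<dots> = r + a" using r a by simp
    finally show ?thesis .
  qed
  have l: "ln (r\<^sup>2 + b\<^sup>2) \<le> 2 * ln (r + b)"
  proof -
    have p1: "r\<^sup>2 + b\<^sup>2 > 0" using sq_pos[OF b, of "r\<^sup>2"] by simp
    have p2: "(r + b)\<^sup>2 > 0" using r b by simp
    have "ln (r\<^sup>2 + b\<^sup>2) \<le> ln ((r + b)\<^sup>2)" using r b
      by (subst ln_le_cancel_iff[OF p1 p2]) (simp add: power2_eq_square algebra_simps)
    also have "\<dots> = 2 * ln (r + b)" using r b by (simp add: ln_realpow)
    finally show ?thesis .
  qed
  have l2: "ln (r + b) \<le> ln M + (r + b)/M - 1" using r b M by (intro ln_tangent) auto
  define Z where "Z = ln M + (r+b)/M - 1"
  have "2 * ln (r + b) \<le> 2 * Z" using mult_left_mono[OF l2, of 2] by (simp add: Z_def)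
  then have "ln (r\<^sup>2 + b\<^sup>2) \<le> 2 * Z" using l by linarith
  then have "e / 4 * ln (r\<^sup>2 + b\<^sup>2) \<le> e / 4 * (2 * Z)"
    using e by (intro mult_left_mono) auto
  then have "e / 4 * ln (r\<^sup>2 + b\<^sup>2) \<le> e / 2 * Z" by (simp add: mult_ac)
  then have "e / 4 * ln (r\<^sup>2 + b\<^sup>2) \<le> e / 2 * (ln M + (r+b)/M - 1)" by (simp add: Z_def)
  then show ?thesis unfolding G0_def using s by linarith
qed

lemma G0_lower:
  assumes a: "a > 0" and b: "b > 0" and e: "e > 0" and t: "t > 0"
  shows "t/2 + e/2 * ln t + c \<le> G0 e a b c (t\<^sup>2)"
proof -
  have s: "t \<le> (t\<^sup>2 + a\<^sup>2) powr (1/2)"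
  proof -
    have "t \<le> sqrt (t\<^sup>2 + a\<^sup>2)" using t by (simp add: real_le_rsqrt)
    then show ?thesis by (simp add: powr_half_sqrt)
  qed
  have l: "2 * ln t \<le> ln (t\<^sup>2 + b\<^sup>2)"
  proof -
    have "2 * ln t = ln (t\<^sup>2)" using t by (simp add: ln_realpow)
    also have "\<dots> \<le> ln (t\<^sup>2 + b\<^sup>2)" using t b sq_pos[OF b, of "t\<^sup>2"] by (subst ln_le_cancel_iff) auto
    finally show ?thesis .
  qed
  have "e / 4 * (2 * ln t) \<le> e / 4 * ln (t\<^sup>2 + b\<^sup>2)" using l e by (intro mult_left_mono) auto
  then have "e / 2 * ln t \<le> e / 4 * ln (t\<^sup>2 + b\<^sup>2)" by (simp add: mult_ac)
  then show ?thesis unfolding G0_def using s by linarith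
qed

lemma locbdd_Feps: fixes x :: vec2 shows "locbdd (\<lambda>X q. Feps e X q x)"
  unfolding locbdd_def
proof
  fix R show "\<exists>M. \<forall>Y q. norm Y \<le> R \<longrightarrow> norm q \<le> R \<longrightarrow> q \<noteq> 0 \<longrightarrow> \<bar>Feps e Y q x\<bar> \<le> M"
  proof (intro exI allI impI)
    fix Y :: mat2 and q :: vec2 assume a: "norm Y \<le> R" "norm q \<le> R" "q \<noteq> 0"
    have t: "\<bar>trm (unitv q) Y\<bar> \<le> 6 * R" using trm_bound norm_unitv a by (smt (verit))
    have "\<bar>e * trm (unitv q) Y\<bar> \<le> \<bar>e\<bar> * (6 * R)"
      unfolding abs_mult using t by (intro mult_left_mono) auto
    then show "\<bar>Feps e Y q x\<bar> \<le> \<bar>e\<bar> * (6 * R) + R" using a norm_ge_zero[of q]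
      unfolding Feps_eq abs_le_iff by linarith
  qed
qed

lemma outer00: "outer 0 0 = 0"
  by (simp add: outer_def vec_eq_iff)

lemma trm_zero: "trm u 0 = 0" by (simp add: trm_expl)

lemma pair_dists:
  assumes "dist (Y,q) (X,p) < d"
  shows "norm (Y - X) < d" "norm q < norm p + d" "norm p < norm q + d"
proof -
  have "dist Y X < d" "dist q p < d"
    using assms dist_fst_le[of "(Y,q)" "(X,p)"] dist_snd_le[of "(Y,q)" "(X,p)"] by auto
  then show "norm (Y - X) < d" "norm q < norm p + d" "norm p < norm q + d"
    using norm_triangle_ineq2[of q p] norm_triangle_ineq2[of p q]
    by (auto simp: dist_norm norm_minus_commute)
qed

lemma B_strict:
  assumes e: "e > 0" and a: "a > 0" and b: "b > 0" and eta: "\<eta> > 0" and sg: "sg = 1/2 + \<eta>"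
    and K: "K \<ge> 0" and k: "k \<ge> 0"
  shows "ABs sg K k T s + lower_env (\<lambda>X q. Feps e X q x)
     ((2 * - G1 e a b (x \<bullet> x)) *\<^sub>R mat 1 + (4 * - G2 e a b (x \<bullet> x)) *\<^sub>R outer x x)
     ((2 * - G1 e a b (x \<bullet> x)) *\<^sub>R x) > 0"
proof -
  define \<alpha> where "\<alpha> = - G1 e a b (x \<bullet> x)"
  define \<beta> where "\<beta> = - G2 e a b (x \<bullet> x)"
  define D2 where "D2 = (2 * \<alpha>) *\<^sub>R mat 1 + (4 * \<beta>) *\<^sub>R outer x x"
  define p where "p = (2 * \<alpha>) *\<^sub>R x"
  have \<alpha>neg: "\<alpha> < 0" unfolding \<alpha>_def using G1_pos[OF a b e, of "x \<bullet> x"] by simp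
  have As: "ABs sg K k T s \<ge> sg" unfolding ABs_def using K k by simp
  have env: "lower_env (\<lambda>X q. Feps e X q x) D2 p \<ge> -1/2 - \<eta>/2"
  proof (cases "x = 0")
    case True
    have D2e: "D2 = (2 * \<alpha>) *\<^sub>R mat 1" and pe: "p = 0" using True by (simp_all add: D2_def p_def outer00)
    define d0 where "d0 = \<eta> / (2 * (6 * e + 1))"
    have d0: "d0 > 0" using eta e by (simp add: d0_def)
    have d0e: "(6 * e + 1) * d0 = \<eta> / 2" using e by (simp add: d0_def field_simps)
    have "- \<eta>/2 \<le> lower_env (\<lambda>X q. Feps e X q x) D2 p"
    proof (rule lower_env_ge[OF locbdd_Feps d0])
      fix Y q assume dq: "dist (Y,q) (D2,p) < d0" and q0: "q \<noteq> 0"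
      have nY: "norm (Y - D2) < d0" and nq: "norm q < d0" using pair_dists[OF dq] pe by auto
      have u1: "norm (unitv q) = 1" using norm_unitv[OF q0] .
      have tD: "trm (unitv q) D2 = 2 * \<alpha>" using D2e u1 by (simp add: trm_scale trm_id)
      have tY: "trm (unitv q) Y = 2 * \<alpha> + trm (unitv q) (Y - D2)" using tD by (simp add: trm_diff)
      have "\<bar>trm (unitv q) (Y - D2)\<bar> \<le> 6 * norm (Y - D2)" using trm_bound u1 by simp
      then have "trm (unitv q) Y \<le> 6 * d0" using tY nY \<alpha>neg by (simp add: abs_le_iff)
      then have "e * trm (unitv q) Y \<le> e * (6 * d0)" using e by (intro mult_left_mono) auto
      then show "- \<eta>/2 \<le> Feps e Y q x" using nq d0e unfolding Feps_eq by (simp add: algebra_simps)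
    qed
    then show ?thesis by linarith
  next
    case False
    have a0: "\<alpha> \<noteq> 0" using \<alpha>neg by simp
    have p0: "p \<noteq> 0" using False a0 by (simp add: p_def)
    have tp: "trm (unitv p) D2 = 2 * \<alpha>" unfolding p_def D2_def by (rule trm_radial[OF False a0])
    have np: "norm p = - 2 * \<alpha> * norm x" using \<alpha>neg by (simp add: p_def)
    have r2: "x \<bullet> x = (norm x)\<^sup>2" by (simp add: power2_norm_eq_inner)
    have gb: "2 * G1 e a b ((norm x)\<^sup>2) * (norm x - e) \<le> 1/2" by (rule G1_bound[OF a b e norm_ge_zero])
    have Fp: "- e * trm (unitv p) D2 - norm p \<ge> -1/2"
      using gb unfolding tp np \<alpha>_def r2 by (simp add: algebra_simps)
    obtain d where d: "d > 0" and dd: "\<And>z. dist z (D2,p) < d \<Longrightarrow>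
        dist (trm (unitv (snd z)) (fst z)) (trm (unitv (snd (D2,p))) (fst (D2,p))) < \<eta> / (4 * e)"
      using trm_cont[OF p0, of D2] e eta unfolding continuous_at_eps_delta
      by (metis divide_pos_pos mult_pos_pos zero_less_numeral)
    define d0 where "d0 = min d (\<eta>/4)"
    have d0: "d0 > 0" using d eta by (simp add: d0_def)
    have "-1/2 - \<eta>/2 \<le> lower_env (\<lambda>X q. Feps e X q x) D2 p"
    proof (rule lower_env_ge[OF locbdd_Feps d0])
      fix Y q assume dq: "dist (Y,q) (D2,p) < d0" and q0: "q \<noteq> 0"
      have "dist (Y,q) (D2,p) < d" using dq by (simp add: d0_def)
      then have "\<bar>trm (unitv q) Y - trm (unitv p) D2\<bar> < \<eta> / (4 * e)" using dd[of "(Y,q)"] by (simp add: dist_real_def)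
      then have "e * \<bar>trm (unitv q) Y - trm (unitv p) D2\<bar> \<le> e * (\<eta> / (4 * e))" using e by (intro mult_left_mono) auto
      then have "e * \<bar>trm (unitv q) Y - trm (unitv p) D2\<bar> \<le> \<eta> / 4" using e by simp
      moreover have "e * (trm (unitv q) Y - trm (unitv p) D2) \<le> e * \<bar>trm (unitv q) Y - trm (unitv p) D2\<bar>"
        using e by (intro mult_left_mono) auto
      moreover have "e * (trm (unitv q) Y - trm (unitv p) D2) = e * trm (unitv q) Y - e * trm (unitv p) D2"
        by (simp add: right_diff_distrib)
      ultimately have t1: "e * trm (unitv q) Y \<le> e * trm (unitv p) D2 + \<eta> / 4" by linarith
      have "norm q < norm p + d0" using pair_dists[OF dq] by simp
      then have t2: "norm q \<le> norm p + \<eta>/4" by (simp add: d0_def)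
      show "-1/2 - \<eta>/2 \<le> Feps e Y q x" using t1 t2 Fp unfolding Feps_eq by linarith
    qed
    then show ?thesis .
  qed
  show ?thesis using As env sg eta unfolding D2_def p_def \<alpha>_def \<beta>_def by linarith
qed

lemma partB:
  fixes v :: "vec2 \<times> real \<Rightarrow> real" and x :: vec2
  assumes e: "e > 0" and sol: "cauchy_sol (Feps e) (\<lambda>x. - norm x) v"
    and t: "t > 0" and nx: "norm x = t" and g: "\<gamma> > 0"
  shows "v (x,t) \<le> -(e/2) * (ln (t/e) + 1) + \<gamma>"
proof -
  define T' where "T' = t + 1"
  have T': "T' > 0" using t by (simp add: T'_def)
  have vc: "continuous_on (UNIV \<times> {0..}) v" and uc: "uniformly_continuous_on (UNIV \<times> {0..T'}) v"
    and v0: "\<And>y. v (y,0) = - norm y" and sub: "par_sub (Feps e) v"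
    using sol T' unfolding cauchy_sol_def by auto
  obtain C0 where C0: "\<And>y s. 0 \<le> s \<Longrightarrow> s \<le> T' \<Longrightarrow> \<bar>v (y,s) - v (y,0)\<bar> \<le> C0"
    using ucont_bound[OF uc] T' by force
  define C where "C = max C0 0"
  have Cb: "\<And>y s. 0 \<le> s \<Longrightarrow> s \<le> T' \<Longrightarrow> v (y,s) \<le> - norm y + C"
    using C0 v0 unfolding C_def by (smt (verit))
  have C: "C \<ge> 0" by (simp add: C_def)
  define \<mu> where "\<mu> = min 1 (\<gamma> / (t + 3))"
  have \<mu>0: "\<mu> > 0" using g t by (simp add: \<mu>_def)
  have \<mu>1: "\<mu> \<le> 1" by (simp add: \<mu>_def)
  have \<mu>g: "\<mu> * (t + 2) < \<gamma>"
  proof -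
    have "\<mu> \<le> \<gamma> / (t + 3)" by (simp add: \<mu>_def)
    then have "\<mu> * (t + 2) \<le> \<gamma> / (t + 3) * (t + 2)" using t by (intro mult_right_mono) auto
    also have "\<dots> < \<gamma>" using g t by (simp add: field_simps)
    finally show ?thesis .
  qed
  define sg where "sg = 1/2 + \<mu>"
  define c where "c = -(e/2) * (ln e - 1) - (\<mu> + \<mu>)/2"
  define K where "K = C + 1"
  define k where "k = ln (K / \<mu>)"
  have K1: "K \<ge> 1" using C by (simp add: K_def)
  have k0: "k \<ge> 0" unfolding k_def using K1 \<mu>1 \<mu>0 by (simp add: le_divide_eq)
  have Kek: "K * exp (- k) = \<mu>" unfolding k_def using K1 \<mu>0 by (simp add: exp_minus)
  define \<psi> where "\<psi> = (\<lambda>z::vec2\<times>real. AB e \<mu> \<mu> c sg K k T' (fst z \<bullet> fst z) (snd z))"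
  have C21: "C21_test \<psi> (\<lambda>z. ABs sg K k T' (snd z))
     (\<lambda>z. (2 * - G1 e \<mu> \<mu> (fst z \<bullet> fst z)) *\<^sub>R fst z)
     (\<lambda>z. (2 * - G1 e \<mu> \<mu> (fst z \<bullet> fst z)) *\<^sub>R mat 1 + (4 * - G2 e \<mu> \<mu> (fst z \<bullet> fst z)) *\<^sub>R outer (fst z) (fst z))"
    unfolding \<psi>_def by (rule B_C21[OF \<mu>0 \<mu>0])
  have pos: "\<And>z::vec2\<times>real. 0 < fst z \<bullet> fst z + \<mu>\<^sup>2" using sq_pos[OF \<mu>0] by simp
  have \<psi>c: "continuous_on UNIV \<psi>"
    unfolding \<psi>_def AB_def G0_def using pos
    by (intro continuous_intros) (auto simp: less_imp_neq[symmetric])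
  have nn: "\<And>y::vec2. y \<bullet> y = (norm y)\<^sup>2" by (simp add: power2_norm_eq_inner)
  have Gup1: "G0 e \<mu> \<mu> c ((norm y)\<^sup>2) \<le> norm y" for y :: vec2
  proof -
    have "G0 e \<mu> \<mu> c ((norm y)\<^sup>2) \<le> norm y/2 + \<mu>/2 + e/2 * (ln e + (norm y+\<mu>)/e - 1) + c"
      by (rule G0_upper[OF \<mu>0 \<mu>0 e norm_ge_zero e])
    also have "\<dots> = norm y" using e by (simp add: c_def field_simps)
    finally show ?thesis .
  qed
  define c1 where "c1 = \<mu>/2 + e/2 * (ln (2*e) - 1) + \<mu>/4 + c"
  have Gup2: "G0 e \<mu> \<mu> c ((norm y)\<^sup>2) \<le> 3/4 * norm y + c1" for y :: vec2
  proof -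
    have "G0 e \<mu> \<mu> c ((norm y)\<^sup>2) \<le> norm y/2 + \<mu>/2 + e/2 * (ln (2*e) + (norm y+\<mu>)/(2*e) - 1) + c"
      by (rule G0_upper[OF \<mu>0 \<mu>0 e norm_ge_zero]) (use e in simp)
    also have "\<dots> = 3/4 * norm y + c1" using e by (simp add: c1_def field_simps)
    finally show ?thesis .
  qed
  define R where "R = 4 * max 0 (c1 + C)"
  have "v (x,t) \<le> \<psi> (x,t)"
  proof (rule comp_sub[OF sub vc C21 \<psi>c T', where R=R])
    fix y :: vec2 and s :: real assume "0 < s" "s < T'"
    show "0 < ABs sg K k T' (snd (y, s)) + lower_env (\<lambda>X q. Feps e X q y)
            ((2 * - G1 e \<mu> \<mu> (fst (y, s) \<bullet> fst (y, s))) *\<^sub>R mat 1 + (4 * - G2 e \<mu> \<mu> (fst (y, s) \<bullet> fst (y, s))) *\<^sub>R outer (fst (y, s)) (fst (y, s)))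
            ((2 * - G1 e \<mu> \<mu> (fst (y, s) \<bullet> fst (y, s))) *\<^sub>R fst (y, s))"
      using B_strict[OF e \<mu>0 \<mu>0 \<mu>0 sg_def _ k0, of K T' s y] K1 by simp
  next
    fix y :: vec2
    have "- norm y \<le> - G0 e \<mu> \<mu> c ((norm y)\<^sup>2)" using Gup1[of y] by simp
    also have "\<dots> \<le> \<psi> (y,0)" unfolding \<psi>_def AB_def using nn[of y] K1 by simp
    finally show "v (y,0) \<le> \<psi> (y,0)" using v0 by simp
  next
    fix y :: vec2
    have "v (y,T') \<le> - norm y + C" using Cb[of T' y] T' by simp
    also have "\<dots> \<le> - G0 e \<mu> \<mu> c ((norm y)\<^sup>2) + sg * T' + K"
    proof -
      have "sg * T' \<ge> 0" using \<mu>0 T' by (simp add: sg_def)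
      then show ?thesis using Gup1[of y] K_def by linarith
    qed
    also have "\<dots> = \<psi> (y,T')" unfolding \<psi>_def AB_def using nn[of y] by simp
    finally show "v (y,T') \<le> \<psi> (y,T')" .
  next
    fix y :: vec2 and s :: real assume yR: "R \<le> norm y" and s: "0 \<le> s" "s \<le> T'"
    have "v (y,s) \<le> - norm y + C" using Cb[OF s] .
    also have "\<dots> \<le> - (3/4 * norm y + c1)"
    proof -
      have "c1 + C \<le> R / 4" unfolding R_def by simp
      then show ?thesis using yR by linarith
    qed
    also have "\<dots> \<le> - G0 e \<mu> \<mu> c ((norm y)\<^sup>2)" using Gup2[of y] by simp
    also have "\<dots> \<le> \<psi> (y,s)" unfolding \<psi>_def AB_def using nn[of y] s \<mu>0 K1
      by (simp add: sg_def add_nonneg_nonneg)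
    finally show "v (y,s) \<le> \<psi> (y,s)" .
  qed (use t T'_def in auto)
  also have "\<psi> (x,t) = - G0 e \<mu> \<mu> c (t\<^sup>2) + sg * t + \<mu>"
    unfolding \<psi>_def AB_def using nn[of x] nx Kek by (simp add: T'_def)
  also have "\<dots> \<le> -(t/2 + e/2 * ln t + c) + sg * t + \<mu>"
    using G0_lower[OF \<mu>0 \<mu>0 e t, of c] by simp
  also have "\<dots> = -(e/2) * (ln (t/e) + 1) + \<mu> * (t + 2)"
    using e t by (simp add: sg_def c_def ln_div field_simps)
  also have "\<dots> \<le> -(e/2) * (ln (t/e) + 1) + \<gamma>" using \<mu>g by simp
  finally show ?thesis .
qed

definition sp :: "real \<Rightarrow> real \<Rightarrow> real" where
  "sp \<kappa> y = (y + (y\<^sup>2 + \<kappa>\<^sup>2) powr (1/2)) / 2"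
definition sp1 :: "real \<Rightarrow> real \<Rightarrow> real" where
  "sp1 \<kappa> y = (1 + y * (y\<^sup>2 + \<kappa>\<^sup>2) powr (-1/2)) / 2"
definition sp2 :: "real \<Rightarrow> real \<Rightarrow> real" where
  "sp2 \<kappa> y = ((y\<^sup>2 + \<kappa>\<^sup>2) powr (-1/2) - y\<^sup>2 * (y\<^sup>2 + \<kappa>\<^sup>2) powr (-3/2)) / 2"

lemma sqk_pos: "\<kappa> > 0 \<Longrightarrow> y\<^sup>2 + \<kappa>\<^sup>2 > (0::real)"
  by (simp add: add_nonneg_pos)

lemma sp_deriv: "\<kappa> > 0 \<Longrightarrow> (sp \<kappa> has_real_derivative sp1 \<kappa> y) (at y)"
  unfolding sp_def[abs_def] sp1_def using sqk_pos[of \<kappa> y]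
  by (auto intro!: derivative_eq_intros simp: field_simps powr_minus_divide)

lemma sp1_deriv: "\<kappa> > 0 \<Longrightarrow> (sp1 \<kappa> has_real_derivative sp2 \<kappa> y) (at y)"
  unfolding sp1_def[abs_def] sp2_def using sqk_pos[of \<kappa> y]
  by (auto intro!: derivative_eq_intros simp: field_simps power2_eq_square)

definition rh :: "real \<Rightarrow> real \<Rightarrow> real" where "rh c q = (q + c) powr (1/2)"
definition rh1 :: "real \<Rightarrow> real \<Rightarrow> real" where "rh1 c q = (q + c) powr (-1/2) / 2"
definition rh2 :: "real \<Rightarrow> real \<Rightarrow> real" where "rh2 c q = - ((q + c) powr (-3/2) / 4)"

lemma rh_deriv: "q + c > 0 \<Longrightarrow> (rh c has_real_derivative rh1 c q) (at q)"
  unfolding rh_def[abs_def] rh1_def by (auto intro!: derivative_eq_intros)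

lemma rh1_deriv: "q + c > 0 \<Longrightarrow> (rh1 c has_real_derivative rh2 c q) (at q)"
  unfolding rh1_def[abs_def] rh2_def by (auto intro!: derivative_eq_intros)

definition AA :: "real \<Rightarrow> real \<Rightarrow> real \<Rightarrow> real \<Rightarrow> real \<Rightarrow> real \<Rightarrow> real \<Rightarrow> real \<Rightarrow> real \<Rightarrow> real \<Rightarrow> real" where
  "AA \<kappa> a z2 \<eta> \<delta> K k T q s = -(z2 + sp \<kappa> (rh (a\<^sup>2) q - s - z2) + \<eta> * s + \<delta> * rh 1 q + K * exp (k * (s - T)))"
definition AAs :: "real \<Rightarrow> real \<Rightarrow> real \<Rightarrow> real \<Rightarrow> real \<Rightarrow> real \<Rightarrow> real \<Rightarrow> real \<Rightarrow> real \<Rightarrow> real" where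
  "AAs \<kappa> a z2 \<eta> K k T q s = sp1 \<kappa> (rh (a\<^sup>2) q - s - z2) - \<eta> - K * k * exp (k * (s - T))"
definition AAq :: "real \<Rightarrow> real \<Rightarrow> real \<Rightarrow> real \<Rightarrow> real \<Rightarrow> real \<Rightarrow> real" where
  "AAq \<kappa> a z2 \<delta> q s = - (sp1 \<kappa> (rh (a\<^sup>2) q - s - z2) * rh1 (a\<^sup>2) q + \<delta> * rh1 1 q)"
definition AAqq :: "real \<Rightarrow> real \<Rightarrow> real \<Rightarrow> real \<Rightarrow> real \<Rightarrow> real \<Rightarrow> real" where
  "AAqq \<kappa> a z2 \<delta> q s = - ((sp2 \<kappa> (rh (a\<^sup>2) q - s - z2) * rh1 (a\<^sup>2) q) * rh1 (a\<^sup>2) q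
      + rh2 (a\<^sup>2) q * sp1 \<kappa> (rh (a\<^sup>2) q - s - z2) + \<delta> * rh2 1 q)"

lemma A_C21:
  assumes a: "a > 0" and \<kappa>: "\<kappa> > 0"
  shows "C21_test (\<lambda>z. AA \<kappa> a z2 \<eta> \<delta> K k T (fst z \<bullet> fst z) (snd z)) (\<lambda>z. AAs \<kappa> a z2 \<eta> K k T (fst z \<bullet> fst z) (snd z))
     (\<lambda>z. (2 * AAq \<kappa> a z2 \<delta> (fst z \<bullet> fst z) (snd z)) *\<^sub>R fst z)
     (\<lambda>z. (2 * AAq \<kappa> a z2 \<delta> (fst z \<bullet> fst z) (snd z)) *\<^sub>R mat 1 + (4 * AAqq \<kappa> a z2 \<delta> (fst z \<bullet> fst z) (snd z)) *\<^sub>R outer (fst z) (fst z))"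
proof (rule radial_C21)
  fix q s :: real assume q: "q \<ge> 0"
  have qa: "q + a\<^sup>2 > 0" using sq_pos[OF a q] .
  have q1: "q + 1 > 0" using q by simp
  have g: "((\<lambda>q. rh (a\<^sup>2) q - s - z2) has_real_derivative rh1 (a\<^sup>2) q) (at q)"
    using DERIV_diff[OF DERIV_diff[OF rh_deriv[OF qa] DERIV_const] DERIV_const] by simp
  have spg: "((\<lambda>q. sp \<kappa> (rh (a\<^sup>2) q - s - z2)) has_real_derivative sp1 \<kappa> (rh (a\<^sup>2) q - s - z2) * rh1 (a\<^sup>2) q) (at q)"
    by (rule DERIV_chain2[OF sp_deriv[OF \<kappa>] g])
  have sp1g: "((\<lambda>q. sp1 \<kappa> (rh (a\<^sup>2) q - s - z2)) has_real_derivative sp2 \<kappa> (rh (a\<^sup>2) q - s - z2) * rh1 (a\<^sup>2) q) (at q)"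
    by (rule DERIV_chain2[OF sp1_deriv[OF \<kappa>] g])
  show "((\<lambda>q. AA \<kappa> a z2 \<eta> \<delta> K k T q s) has_real_derivative AAq \<kappa> a z2 \<delta> q s) (at q)"
    unfolding AA_def AAq_def
    using DERIV_minus[OF DERIV_add[OF DERIV_add[OF DERIV_add[OF DERIV_add[OF DERIV_const[of z2] spg] DERIV_const[of "\<eta> * s"]] DERIV_cmult[OF rh_deriv[OF q1], of \<delta>]] DERIV_const[of "K * exp (k * (s - T))"]]]
    by simp
  show "((\<lambda>q. AAq \<kappa> a z2 \<delta> q s) has_real_derivative AAqq \<kappa> a z2 \<delta> q s) (at q)"
    unfolding AAq_def AAqq_def
    using DERIV_minus[OF DERIV_add[OF DERIV_mult[OF sp1g rh1_deriv[OF qa]] DERIV_cmult[OF rh1_deriv[OF q1], of \<delta>]]]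
    by simp
  have gs: "((\<lambda>s. rh (a\<^sup>2) q - s - z2) has_real_derivative -1) (at s)"
    by (auto intro!: derivative_eq_intros)
  have sps: "((\<lambda>s. sp \<kappa> (rh (a\<^sup>2) q - s - z2)) has_real_derivative sp1 \<kappa> (rh (a\<^sup>2) q - s - z2) * -1) (at s)"
    by (rule DERIV_chain2[OF sp_deriv[OF \<kappa>] gs])
  have ex: "((\<lambda>s. K * exp (k * (s - T))) has_real_derivative K * k * exp (k * (s - T))) (at s)"
    by (auto intro!: derivative_eq_intros)
  show "((\<lambda>s. AA \<kappa> a z2 \<eta> \<delta> K k T q s) has_real_derivative AAs \<kappa> a z2 \<eta> K k T q s) (at s)"
    unfolding AA_def AAs_def
    using DERIV_minus[OF DERIV_add[OF DERIV_add[OF DERIV_add[OF DERIV_add[OF DERIV_const[of z2] sps] DERIV_cmult[OF DERIV_ident, of \<eta>]] DERIV_const[of "\<delta> * rh 1 q"]] ex]]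
    by simp
next
  have pa: "\<And>w::real\<times>real. w \<in> {0..} \<times> UNIV \<Longrightarrow> 0 < fst w + a\<^sup>2" using sq_pos[OF a] by auto
  have p1: "\<And>w::real\<times>real. w \<in> {0..} \<times> UNIV \<Longrightarrow> 0 < fst w + 1" by auto
  have pk: "\<And>y. 0 < y\<^sup>2 + \<kappa>\<^sup>2" using sqk_pos[OF \<kappa>] by auto
  show "continuous_on ({0..} \<times> UNIV) (\<lambda>w::real\<times>real. AAs \<kappa> a z2 \<eta> K k T (fst w) (snd w))"
    unfolding AAs_def sp1_def rh_def using pa pk by (intro continuous_intros) (fastforce simp: less_imp_neq[symmetric])+
  show "continuous_on ({0..} \<times> UNIV) (\<lambda>w::real\<times>real. AAq \<kappa> a z2 \<delta> (fst w) (snd w))"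
    unfolding AAq_def sp1_def rh_def rh1_def using pa p1 pk by (intro continuous_intros) (fastforce simp: less_imp_neq[symmetric])+
  show "continuous_on ({0..} \<times> UNIV) (\<lambda>w::real\<times>real. AAqq \<kappa> a z2 \<delta> (fst w) (snd w))"
    unfolding AAqq_def sp1_def sp2_def rh_def rh1_def rh2_def using pa p1 pk by (intro continuous_intros) (fastforce simp: less_imp_neq[symmetric])+
qed

lemma sq_sqrt_pos: "\<kappa> > 0 \<Longrightarrow> sqrt (y\<^sup>2 + \<kappa>\<^sup>2) > \<bar>y\<bar>"
proof -
  assume k: "\<kappa> > 0"
  have "sqrt (y\<^sup>2) < sqrt (y\<^sup>2 + \<kappa>\<^sup>2)" using k by (intro real_sqrt_less_mono) simp
  then show ?thesis by simp
qed

lemma sp_alt: "\<kappa> > 0 \<Longrightarrow> sp \<kappa> y = (y + sqrt (y\<^sup>2 + \<kappa>\<^sup>2)) / 2"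
  unfolding sp_def by (simp add: powr_half_sqrt add_nonneg_nonneg)

lemma sp1_alt: "\<kappa> > 0 \<Longrightarrow> sp1 \<kappa> y = (1 + y / sqrt (y\<^sup>2 + \<kappa>\<^sup>2)) / 2"
  unfolding sp1_def using powr_mhalf[OF sqk_pos[of \<kappa> y]] by simp

lemma sp_ge: "\<kappa> > 0 \<Longrightarrow> y \<le> sp \<kappa> y"
  using sq_sqrt_pos[of \<kappa> y] by (simp add: sp_alt)

lemma sp_nonneg: "\<kappa> > 0 \<Longrightarrow> 0 \<le> sp \<kappa> y"
  using sq_sqrt_pos[of \<kappa> y] by (simp add: sp_alt)

lemma sp_le0: "\<kappa> > 0 \<Longrightarrow> y \<le> 0 \<Longrightarrow> sp \<kappa> y \<le> \<kappa> / 2"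
proof -
  assume k: "\<kappa> > 0" and y: "y \<le> 0"
  have "sqrt (y\<^sup>2 + \<kappa>\<^sup>2) \<le> sqrt ((\<kappa> - y)\<^sup>2)"
    using k y by (intro real_sqrt_le_mono) (simp add: power2_eq_square algebra_simps mult_nonneg_nonpos)
  also have "\<dots> = \<kappa> - y" using k y by simp
  finally show ?thesis using k by (simp add: sp_alt)
qed

lemma sp1_bounds: "\<kappa> > 0 \<Longrightarrow> 0 \<le> sp1 \<kappa> y \<and> sp1 \<kappa> y \<le> 1"
proof -
  assume k: "\<kappa> > 0"
  have S: "sqrt (y\<^sup>2 + \<kappa>\<^sup>2) > \<bar>y\<bar>" using sq_sqrt_pos[OF k] .
  have Sp: "sqrt (y\<^sup>2 + \<kappa>\<^sup>2) > 0" using S by linarith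
  have "\<bar>y\<bar> / sqrt (y\<^sup>2 + \<kappa>\<^sup>2) \<le> 1" using S Sp by (simp add: pos_divide_le_eq)
  moreover have "\<bar>y / sqrt (y\<^sup>2 + \<kappa>\<^sup>2)\<bar> = \<bar>y\<bar> / sqrt (y\<^sup>2 + \<kappa>\<^sup>2)" using Sp by (simp add: abs_div)
  ultimately have h: "\<bar>y / sqrt (y\<^sup>2 + \<kappa>\<^sup>2)\<bar> \<le> 1" by linarith
  have "y / sqrt (y\<^sup>2 + \<kappa>\<^sup>2) \<le> 1 \<and> - (y / sqrt (y\<^sup>2 + \<kappa>\<^sup>2)) \<le> 1"
    using abs_le_iff[THEN iffD1, OF h] .
  then have "-1 \<le> y / sqrt (y\<^sup>2 + \<kappa>\<^sup>2) \<and> y / sqrt (y\<^sup>2 + \<kappa>\<^sup>2) \<le> 1" by linarith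
  then show ?thesis unfolding sp1_alt[OF k] by simp
qed

lemma sp1_neg:
  assumes k: "\<kappa> > 0" and d: "d > 0" and y: "y \<le> - d"
  shows "sp1 \<kappa> y \<le> \<kappa>\<^sup>2 / (4 * d\<^sup>2)"
proof -
  define S where "S = sqrt (y\<^sup>2 + \<kappa>\<^sup>2)"
  have S: "S > \<bar>y\<bar>" unfolding S_def using sq_sqrt_pos[OF k] .
  have S2: "S\<^sup>2 = y\<^sup>2 + \<kappa>\<^sup>2" unfolding S_def by (simp add: add_nonneg_nonneg)
  have Sd: "S \<ge> d" "S - y \<ge> 2 * d" using S y d by auto
  have Sp: "S > 0" using Sd d by linarith
  have e: "sp1 \<kappa> y = \<kappa>\<^sup>2 / (2 * S * (S - y))"
  proof -
    have "sp1 \<kappa> y = (1 + y / S) / 2" unfolding S_def by (rule sp1_alt[OF k])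
    also have "\<dots> = (S + y) / (2 * S)" using Sp by (simp add: field_simps)
    finally have "sp1 \<kappa> y = (S + y) / (2 * S)" .
    also have "\<dots> = (S + y) * (S - y) / (2 * S * (S - y))" using Sd d by simp
    also have "(S + y) * (S - y) = \<kappa>\<^sup>2" using S2 by (simp add: algebra_simps power2_eq_square)
    finally show ?thesis .
  qed
  have le4: "4 * d\<^sup>2 \<le> 2 * S * (S - y)"
  proof -
    have "d * (2 * d) \<le> S * (S - y)" using Sd d by (intro mult_mono) auto
    then show ?thesis by (simp add: power2_eq_square)
  qed
  have P1: "0 < 2 * S * (S - y)" using Sp Sd d by simp
  have P2: "0 < 4 * d\<^sup>2" using d by simp
  have P: "0 < (2 * S * (S - y)) * (4 * d\<^sup>2)" by (rule mult_pos_pos[OF P1 P2])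
  have "\<kappa>\<^sup>2 / (2 * S * (S - y)) \<le> \<kappa>\<^sup>2 / (4 * d\<^sup>2)"
    by (rule divide_left_mono[OF le4 _ P]) simp
  then show ?thesis using e by simp
qed

lemma rh_alt: "q + c \<ge> 0 \<Longrightarrow> rh c q = sqrt (q + c)"
  unfolding rh_def by (simp add: powr_half_sqrt)

lemma rh1_alt: "q + c > 0 \<Longrightarrow> rh1 c q = 1 / (2 * sqrt (q + c))"
  unfolding rh1_def using powr_mhalf by simp

lemma ratio_bound:
  assumes a: "a > 0" and that: "r \<ge> 0"
  shows "1 - r / sqrt (r\<^sup>2 + a\<^sup>2) \<le> a\<^sup>2 / (r\<^sup>2 + a\<^sup>2)" and "0 \<le> 1 - r / sqrt (r\<^sup>2 + a\<^sup>2)"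
proof -
  define \<rho> where "\<rho> = sqrt (r\<^sup>2 + a\<^sup>2)"
  have r2: "\<rho>\<^sup>2 = r\<^sup>2 + a\<^sup>2" unfolding \<rho>_def by (simp add: add_nonneg_nonneg)
  have rr: "r < \<rho>" unfolding \<rho>_def using sq_sqrt_pos[OF a, of r] that by simp
  have rp: "\<rho> > 0" using rr that by linarith
  have "1 - r / \<rho> = (\<rho> - r) / \<rho>" using rp by (simp add: field_simps)
  also have "\<dots> = ((\<rho> - r) * (\<rho> + r)) / (\<rho> * (\<rho> + r))"
    using rp that by (simp add: mult_divide_mult_cancel_right)
  also have "\<dots> = a\<^sup>2 / (\<rho> * (\<rho> + r))"
  proof -
    have "(\<rho> - r) * (\<rho> + r) = a\<^sup>2" using r2 by (simp add: algebra_simps power2_eq_square)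
    then show ?thesis by simp
  qed
  also have "\<dots> \<le> a\<^sup>2 / (\<rho> * \<rho>)" using rp that by (intro divide_left_mono mult_left_mono) auto
  also have "\<dots> = a\<^sup>2 / (r\<^sup>2 + a\<^sup>2)" using r2 by (simp add: power2_eq_square)
  finally show "1 - r / sqrt (r\<^sup>2 + a\<^sup>2) \<le> a\<^sup>2 / (r\<^sup>2 + a\<^sup>2)" unfolding \<rho>_def .
  show "0 \<le> 1 - r / sqrt (r\<^sup>2 + a\<^sup>2)" using rr rp unfolding \<rho>_def[symmetric] by (simp add: field_simps)
qed

lemma Feff_eq: "q \<noteq> 0 \<Longrightarrow> Feff X q y = - norm q"
  unfolding Feff_def using Fbar_unit[OF norm_unitv] by simp

lemma locbdd_Feff: fixes y :: vec2 shows "locbdd (\<lambda>X q. Feff X q y)"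
  unfolding locbdd_def
proof
  fix R show "\<exists>M. \<forall>Y q. norm Y \<le> R \<longrightarrow> norm q \<le> R \<longrightarrow> q \<noteq> 0 \<longrightarrow> \<bar>Feff Y q y\<bar> \<le> M"
    by (intro exI[of _ R] allI impI) (simp add: Feff_eq)
qed

lemma upper_env_Feff:
  fixes y :: vec2
  assumes d0: "d0 > 0" shows "upper_env (\<lambda>X q. Feff X q y) X p \<le> - norm p + d0"
proof (rule upper_env_le[OF locbdd_Feff d0])
  fix Y q assume "dist (Y,q) (X,p) < d0" "q \<noteq> 0"
  then show "Feff Y q y \<le> - norm p + d0" using pair_dists(3) Feff_eq by fastforce
qed

lemma key_A:
  fixes \<mu> r s :: real
  assumes \<mu>0: "\<mu> > 0" and r: "r \<ge> 0" and s: "s > 0"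
  shows "sp1 (\<mu>^3) (sqrt (r\<^sup>2 + (\<mu>\<^sup>2)\<^sup>2) - s - (\<mu> + \<mu>\<^sup>2)) * (1 - r / sqrt (r\<^sup>2 + (\<mu>\<^sup>2)\<^sup>2)) \<le> \<mu>\<^sup>2"
proof -
  define \<rho> where "\<rho> = sqrt (r\<^sup>2 + (\<mu>\<^sup>2)\<^sup>2)"
  define W where "W = 1 - r / \<rho>"
  define A1 where "A1 = sp1 (\<mu>^3) (\<rho> - s - (\<mu> + \<mu>\<^sup>2))"
  have a0: "\<mu>\<^sup>2 > 0" using \<mu>0 by simp
  have k0: "\<mu>^3 > 0" using \<mu>0 by simp
  have W1: "W \<le> (\<mu>\<^sup>2)\<^sup>2 / (r\<^sup>2 + (\<mu>\<^sup>2)\<^sup>2)" and W0: "0 \<le> W"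
    using ratio_bound[OF a0 r] unfolding W_def \<rho>_def by auto
  have A1b: "0 \<le> A1" "A1 \<le> 1" using sp1_bounds[OF k0] unfolding A1_def by auto
  have \<rho>2: "\<rho>\<^sup>2 = r\<^sup>2 + (\<mu>\<^sup>2)\<^sup>2" unfolding \<rho>_def by (simp add: add_nonneg_nonneg)
  have \<rho>0: "\<rho> \<ge> 0" unfolding \<rho>_def by simp
  have "A1 * W \<le> \<mu>\<^sup>2"
  proof (cases "\<rho> \<ge> \<mu>")
    case True
    have "\<mu>\<^sup>2 \<le> \<rho>\<^sup>2" using True \<mu>0 by (simp add: power_mono)
    then have le: "\<mu>\<^sup>2 \<le> r\<^sup>2 + (\<mu>\<^sup>2)\<^sup>2" using \<rho>2 by simp
    have le0: "0 < r\<^sup>2 + (\<mu>\<^sup>2)\<^sup>2" using le a0 by linarith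
    have P: "0 < (r\<^sup>2 + (\<mu>\<^sup>2)\<^sup>2) * \<mu>\<^sup>2" by (rule mult_pos_pos[OF le0 a0])
    have "(\<mu>\<^sup>2)\<^sup>2 / (r\<^sup>2 + (\<mu>\<^sup>2)\<^sup>2) \<le> (\<mu>\<^sup>2)\<^sup>2 / \<mu>\<^sup>2"
      by (rule divide_left_mono[OF le _ P]) simp
    also have "\<dots> = \<mu>\<^sup>2" using a0 by (simp add: power2_eq_square)
    finally have "W \<le> \<mu>\<^sup>2" using W1 by linarith
    moreover have "A1 * W \<le> 1 * W" using A1b W0 by (intro mult_right_mono) auto
    ultimately show ?thesis by simp
  next
    case False
    have "\<rho> - s - (\<mu> + \<mu>\<^sup>2) \<le> - \<mu>\<^sup>2" using False s by simp
    then have "A1 \<le> (\<mu>^3)\<^sup>2 / (4 * (\<mu>\<^sup>2)\<^sup>2)" unfolding A1_def by (rule sp1_neg[OF k0 a0])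
    also have "\<dots> = \<mu>\<^sup>2 / 4" using \<mu>0 by (simp add: power2_eq_square power3_eq_cube)
    finally have A1s: "A1 \<le> \<mu>\<^sup>2 / 4" .
    have W1': "W \<le> 1" unfolding W_def using r \<rho>0 by (simp add: divide_nonneg_nonneg)
    have "A1 * W \<le> A1 * 1" using A1b W1' by (intro mult_left_mono) auto
    then show ?thesis using A1s a0 A1b by linarith
  qed
  then show ?thesis unfolding A1_def W_def \<rho>_def .
qed

lemma partA:
  fixes u :: "vec2 \<times> real \<Rightarrow> real" and x :: vec2
  assumes sol: "cauchy_sol Feff (\<lambda>x. - norm x) u"
    and t: "t > 0" and nx: "norm x = t" and g: "\<gamma> > 0"
  shows "- \<gamma> \<le> u (x,t)"
proof -
  define T' where "T' = t + 1"
  have T': "T' > 0" using t by (simp add: T'_def)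
  have vc: "continuous_on (UNIV \<times> {0..}) u" and uc: "uniformly_continuous_on (UNIV \<times> {0..T'}) u"
    and u0: "\<And>y. u (y,0) = - norm y" and sup: "par_super Feff u"
    using sol T' unfolding cauchy_sol_def by auto
  obtain C0 where C0: "\<And>y s. 0 \<le> s \<Longrightarrow> s \<le> T' \<Longrightarrow> \<bar>u (y,s) - u (y,0)\<bar> \<le> C0"
    using ucont_bound[OF uc] T' by force
  define C where "C = max C0 0"
  have Cb: "\<And>y s. 0 \<le> s \<Longrightarrow> s \<le> T' \<Longrightarrow> - norm y - C \<le> u (y,s)"
    using C0 u0 unfolding C_def by (smt (verit))
  have C: "C \<ge> 0" by (simp add: C_def)
  define \<mu> where "\<mu> = min 1 (\<gamma> / (3 * t + 6))"
  have \<mu>0: "\<mu> > 0" using g t by (simp add: \<mu>_def)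
  have \<mu>1: "\<mu> \<le> 1" by (simp add: \<mu>_def)
  have \<mu>g: "\<mu> * (9/2 + 3 * t) < \<gamma>"
  proof -
    have "\<mu> \<le> \<gamma> / (3 * t + 6)" by (simp add: \<mu>_def)
    then have "\<mu> * (9/2 + 3 * t) \<le> \<gamma> / (3 * t + 6) * (9/2 + 3 * t)" using t by (intro mult_right_mono) auto
    also have "\<dots> < \<gamma>" using g t by (simp add: field_simps)
    finally show ?thesis .
  qed
  define a where "a = \<mu>\<^sup>2"
  define z2 where "z2 = \<mu> + \<mu>\<^sup>2"
  define \<kappa> where "\<kappa> = \<mu>^3"
  define \<eta> where "\<eta> = 2 * \<mu>\<^sup>2"
  define \<delta> where "\<delta> = \<mu>\<^sup>2"
  define K where "K = T' + C + 1"
  define k where "k = ln (K / \<mu>)"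
  have a0: "a > 0" and \<kappa>0: "\<kappa> > 0" and \<delta>0: "\<delta> > 0" using \<mu>0 by (simp_all add: a_def \<kappa>_def \<delta>_def)
  have K1: "K \<ge> 1" using C T' by (simp add: K_def)
  have k0: "k \<ge> 0" unfolding k_def using K1 \<mu>1 \<mu>0 by (simp add: le_divide_eq)
  have Kek: "K * exp (- k) = \<mu>" unfolding k_def using K1 \<mu>0 by (simp add: exp_minus)
  define \<phi> where "\<phi> = (\<lambda>z::vec2\<times>real. AA \<kappa> a z2 \<eta> \<delta> K k T' (fst z \<bullet> fst z) (snd z))"
  have C21: "C21_test \<phi> (\<lambda>z. AAs \<kappa> a z2 \<eta> K k T' (fst z \<bullet> fst z) (snd z))
     (\<lambda>z. (2 * AAq \<kappa> a z2 \<delta> (fst z \<bullet> fst z) (snd z)) *\<^sub>R fst z)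
     (\<lambda>z. (2 * AAq \<kappa> a z2 \<delta> (fst z \<bullet> fst z) (snd z)) *\<^sub>R mat 1 + (4 * AAqq \<kappa> a z2 \<delta> (fst z \<bullet> fst z) (snd z)) *\<^sub>R outer (fst z) (fst z))"
    unfolding \<phi>_def by (rule A_C21[OF a0 \<kappa>0])
  have posa: "\<And>z::vec2\<times>real. 0 < fst z \<bullet> fst z + a\<^sup>2" using sq_pos[OF a0] by simp
  have pos1: "\<And>z::vec2\<times>real. 0 < fst z \<bullet> fst z + 1" by (simp add: add_nonneg_pos)
  have posk: "\<And>y. 0 < y\<^sup>2 + \<kappa>\<^sup>2" using sqk_pos[OF \<kappa>0] by auto
  have \<phi>c: "continuous_on UNIV \<phi>"
    unfolding \<phi>_def AA_def sp_def rh_def using posa pos1 posk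
    by (intro continuous_intros) (auto simp: less_imp_neq[symmetric])
  have nn: "\<And>y::vec2. y \<bullet> y = (norm y)\<^sup>2" by (simp add: power2_norm_eq_inner)
  have \<phi>v: "\<phi> (y,s) = AA \<kappa> a z2 \<eta> \<delta> K k T' ((norm y)\<^sup>2) s" for y s unfolding \<phi>_def by (simp add: nn)
  have rhA: "rh (a\<^sup>2) ((norm y)\<^sup>2) = sqrt ((norm y)\<^sup>2 + a\<^sup>2)" for y :: vec2 by (rule rh_alt) simp
  have rh1v: "rh 1 ((norm y)\<^sup>2) = sqrt ((norm y)\<^sup>2 + 1)" for y :: vec2 by (rule rh_alt) simp
  have rhAge: "norm y \<le> sqrt ((norm y)\<^sup>2 + a\<^sup>2)" for y :: vec2 by (simp add: real_le_rsqrt)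
  have rh1ge: "norm y \<le> sqrt ((norm y)\<^sup>2 + 1)" for y :: vec2 by (simp add: real_le_rsqrt)
  have AAub: "AA \<kappa> a z2 \<eta> \<delta> K k T' ((norm y)\<^sup>2) s \<le> - (norm y - s) - \<delta> * norm y - K * exp (k * (s - T'))"
    if s: "s \<ge> 0" for y :: vec2 and s
  proof -
    have "rh (a\<^sup>2) ((norm y)\<^sup>2) - s - z2 \<le> sp \<kappa> (rh (a\<^sup>2) ((norm y)\<^sup>2) - s - z2)" by (rule sp_ge[OF \<kappa>0])
    moreover have "\<delta> * norm y \<le> \<delta> * rh 1 ((norm y)\<^sup>2)" using \<delta>0 rh1ge[of y] rh1v[of y] by (simp add: mult_left_mono)
    moreover have "\<eta> * s \<ge> 0" using s \<mu>0 by (simp add: \<eta>_def)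
    ultimately show ?thesis unfolding AA_def using rhA[of y] rhAge[of y] by linarith
  qed
  have "\<phi> (x,t) \<le> u (x,t)"
  proof (rule comp_super[OF sup vc C21 \<phi>c T', where R="(T' + C) / \<delta>"])
    fix y :: vec2 and s :: real assume s: "0 < s" "s < T'"
    define q where "q = y \<bullet> y"
    have qn: "q = (norm y)\<^sup>2" unfolding q_def by (rule nn)
    define \<rho> where "\<rho> = sqrt (q + a\<^sup>2)"
    define z where "z = \<rho> - s - z2"
    have \<rho>: "rh (a\<^sup>2) q = \<rho>" unfolding \<rho>_def qn by (rule rhA)
    have q0: "q \<ge> 0" unfolding qn by simp
    have \<rho>pos: "\<rho> > 0" unfolding \<rho>_def using sq_pos[OF a0 q0] by simp
    have r1a: "rh1 (a\<^sup>2) q = 1 / (2 * \<rho>)" unfolding \<rho>_def by (rule rh1_alt) (use sq_pos[OF a0 q0] in simp)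
    have q1p: "q + 1 > 0" using q0 by simp
    have r1b: "rh1 1 q > 0" unfolding rh1_def using q1p by simp
    define A1 where "A1 = sp1 \<kappa> z"
    have A1b: "0 \<le> A1" "A1 \<le> 1" using sp1_bounds[OF \<kappa>0] unfolding A1_def by auto
    have AAqv: "AAq \<kappa> a z2 \<delta> q s = - (A1 / (2 * \<rho>) + \<delta> * rh1 1 q)"
      unfolding AAq_def A1_def z_def \<rho> r1a by simp
    have nD: "norm ((2 * AAq \<kappa> a z2 \<delta> q s) *\<^sub>R y) \<ge> A1 * norm y / \<rho>"
    proof -
      have c: "2 * AAq \<kappa> a z2 \<delta> q s = - (A1 / \<rho> + 2 * \<delta> * rh1 1 q)"
        unfolding AAqv using \<rho>pos by (simp add: field_simps)
      have X0: "0 \<le> A1 / \<rho> + 2 * \<delta> * rh1 1 q"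
        using A1b \<rho>pos \<delta>0 r1b by (intro add_nonneg_nonneg) auto
      have "norm ((2 * AAq \<kappa> a z2 \<delta> q s) *\<^sub>R y) = (A1 / \<rho> + 2 * \<delta> * rh1 1 q) * norm y"
        unfolding c using X0 by simp
      also have "\<dots> \<ge> (A1 / \<rho>) * norm y" using \<delta>0 r1b by (intro mult_right_mono) auto
      finally show ?thesis by simp
    qed
    have env: "upper_env (\<lambda>X q. Feff X q y) ((2 * AAq \<kappa> a z2 \<delta> q s) *\<^sub>R mat 1 + (4 * AAqq \<kappa> a z2 \<delta> q s) *\<^sub>R outer y y)
        ((2 * AAq \<kappa> a z2 \<delta> q s) *\<^sub>R y) \<le> - (A1 * norm y / \<rho>) + \<mu>\<^sup>2 / 2"
    proof -
      have hp: "\<mu>\<^sup>2 / 2 > 0" using \<mu>0 by simp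
      show ?thesis using upper_env_Feff[OF hp, of y "(2 * AAq \<kappa> a z2 \<delta> q s) *\<^sub>R mat 1 + (4 * AAqq \<kappa> a z2 \<delta> q s) *\<^sub>R outer y y"
        "(2 * AAq \<kappa> a z2 \<delta> q s) *\<^sub>R y"] nD by linarith
    qed
    have AAsv: "AAs \<kappa> a z2 \<eta> K k T' q s \<le> A1 - 2 * \<mu>\<^sup>2"
      unfolding AAs_def A1_def z_def \<rho> \<eta>_def using K1 k0 by simp
    have key: "A1 * (1 - norm y / \<rho>) \<le> \<mu>\<^sup>2"
      using key_A[OF \<mu>0 norm_ge_zero s(1), of y] unfolding A1_def z_def \<rho>_def qn \<kappa>_def a_def z2_def .
    have "A1 - A1 * norm y / \<rho> \<le> \<mu>\<^sup>2" using key by (simp add: right_diff_distrib)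
    then have main: "AAs \<kappa> a z2 \<eta> K k T' q s + upper_env (\<lambda>X q. Feff X q y) ((2 * AAq \<kappa> a z2 \<delta> q s) *\<^sub>R mat 1 + (4 * AAqq \<kappa> a z2 \<delta> q s) *\<^sub>R outer y y)
        ((2 * AAq \<kappa> a z2 \<delta> q s) *\<^sub>R y) < 0" using env AAsv \<mu>0 zero_less_power[of \<mu> 2] by linarith
    then show "AAs \<kappa> a z2 \<eta> K k T' (fst (y, s) \<bullet> fst (y, s)) (snd (y, s)) +
          upper_env (\<lambda>X q. Feff X q y)
           ((2 * AAq \<kappa> a z2 \<delta> (fst (y, s) \<bullet> fst (y, s)) (snd (y, s))) *\<^sub>R mat 1 +
            (4 * AAqq \<kappa> a z2 \<delta> (fst (y, s) \<bullet> fst (y, s)) (snd (y, s))) *\<^sub>R outer (fst (y, s)) (fst (y, s)))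
           ((2 * AAq \<kappa> a z2 \<delta> (fst (y, s) \<bullet> fst (y, s)) (snd (y, s))) *\<^sub>R fst (y, s)) < 0"
      unfolding q_def by simp
  next
    fix y :: vec2
    have h1: "\<delta> * norm y \<ge> 0" using \<delta>0 by simp
    have h2: "K * exp (k * (0 - T')) \<ge> 0" using K1 by simp
    have "\<phi> (y,0) \<le> - norm y"
      using AAub[of 0 y] h1 h2 unfolding \<phi>v by simp
    then show "\<phi> (y,0) \<le> u (y,0)" using u0 by simp
  next
    fix y :: vec2
    have h1: "\<delta> * norm y \<ge> 0" using \<delta>0 by simp
    have "\<phi> (y,T') \<le> - (norm y - T') - K" using AAub[of T' y] h1 T' unfolding \<phi>v by simp
    also have "\<dots> \<le> - norm y - C" by (simp add: K_def)
    also have "\<dots> \<le> u (y,T')" using Cb[of T' y] T' by simp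
    finally show "\<phi> (y,T') \<le> u (y,T')" .
  next
    fix y :: vec2 and s :: real assume yR: "(T' + C) / \<delta> \<le> norm y" and s: "0 \<le> s" "s \<le> T'"
    have "T' + C \<le> \<delta> * norm y" using yR \<delta>0 by (simp add: pos_divide_le_eq mult.commute)
    moreover have "K * exp (k * (s - T')) \<ge> 0" using K1 by simp
    ultimately have "\<phi> (y,s) \<le> - norm y - C" using AAub[OF s(1), of y] s unfolding \<phi>v by simp
    also have "\<dots> \<le> u (y,s)" using Cb[OF s] .
    finally show "\<phi> (y,s) \<le> u (y,s)" .
  qed (use t T'_def in auto)
  moreover have "- \<gamma> \<le> \<phi> (x,t)"
  proof -
    have ex: "K * exp (k * (t - T')) = \<mu>" using Kek by (simp add: T'_def)
    have rA: "sqrt (t\<^sup>2 + a\<^sup>2) \<le> t + a" using t a0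
      by (intro real_le_lsqrt) (auto simp: power2_eq_square algebra_simps)
    have r1: "sqrt (t\<^sup>2 + 1) \<le> t + 1" using t
      by (intro real_le_lsqrt) (auto simp: power2_eq_square algebra_simps)
    have arg: "rh (a\<^sup>2) (t\<^sup>2) - t - z2 \<le> 0" using rA rhA[of x] nx \<mu>0 by (simp add: a_def z2_def)
    have spb: "sp \<kappa> (rh (a\<^sup>2) (t\<^sup>2) - t - z2) \<le> \<mu>^3 / 2" using sp_le0[OF \<kappa>0 arg] by (simp add: \<kappa>_def)
    have rhb: "\<delta> * rh 1 (t\<^sup>2) \<le> \<mu>\<^sup>2 * (t + 1)" using rh1v[of x] nx r1 \<mu>0 by (simp add: \<delta>_def mult_left_mono)
    have "\<phi> (x,t) = AA \<kappa> a z2 \<eta> \<delta> K k T' (t\<^sup>2) t" unfolding \<phi>v using nx by simp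
    also have "\<dots> = -(z2 + sp \<kappa> (rh (a\<^sup>2) (t\<^sup>2) - t - z2) + \<eta> * t + \<delta> * rh 1 (t\<^sup>2) + \<mu>)"
      unfolding AA_def ex ..
    finally have phv: "\<phi> (x,t) = -(z2 + sp \<kappa> (rh (a\<^sup>2) (t\<^sup>2) - t - z2) + \<eta> * t + \<delta> * rh 1 (t\<^sup>2) + \<mu>)" .
    have m2: "\<mu>\<^sup>2 \<le> \<mu>" using \<mu>0 \<mu>1 by (simp add: power2_eq_square mult_left_le)
    have m3: "\<mu>^3 \<le> \<mu>" using \<mu>0 \<mu>1 by (simp add: power3_eq_cube mult_le_one mult_left_le)
    have "\<mu>\<^sup>2 * t \<le> \<mu> * t" using m2 t by (simp add: mult_right_mono)
    then have "z2 + sp \<kappa> (rh (a\<^sup>2) (t\<^sup>2) - t - z2) + \<eta> * t + \<delta> * rh 1 (t\<^sup>2) + \<mu> \<le> \<mu> * (9/2 + 3 * t)"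
      using spb rhb m2 m3 unfolding z2_def \<eta>_def by (simp add: algebra_simps)
    then show ?thesis using phv \<mu>g by linarith
  qed
  ultimately show ?thesis by linarith
qed

theorem proposition1p5:
  fixes \<epsilon> :: real and ueps u :: "vec2 \<times> real \<Rightarrow> real" and x :: vec2 and t :: real
  assumes "\<epsilon> > 0"
    and "cauchy_sol (Feps \<epsilon>) (\<lambda>x. - norm x) ueps"
    and "cauchy_sol Feff (\<lambda>x. - norm x) u"
    and "t \<ge> 0" and "norm x = t" and "t > \<epsilon> * (1 + exp (-1))"
  shows "\<bar>ueps (x, t) - u (x, t)\<bar> \<ge> (1/2) * \<epsilon> * (ln (t / \<epsilon> - 1) + 1)"
proof -
  have e: "\<epsilon> > 0" using assms(1) .
  have "\<epsilon> * 1 < \<epsilon> * (1 + exp (-1))" using e by (intro mult_strict_left_mono) auto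
  then have te: "t > \<epsilon>" using assms(6) by linarith
  then have t: "t > 0" using e by linarith
  have hB: "ueps (x,t) \<le> -(\<epsilon>/2) * (ln (t/\<epsilon>) + 1)"
  proof (rule field_le_epsilon)
    fix g :: real assume "0 < g"
    then show "ueps (x,t) \<le> -(\<epsilon>/2) * (ln (t/\<epsilon>) + 1) + g"
      by (rule partB[OF e assms(2) t assms(5)])
  qed
  have hA: "0 \<le> u (x,t)"
  proof (rule field_le_epsilon)
    fix g :: real assume "0 < g"
    then have "- g \<le> u (x,t)" by (rule partA[OF assms(3) t assms(5)])
    then show "0 \<le> u (x,t) + g" by linarith
  qed
  have q: "t / \<epsilon> - 1 > 0" using te e by (simp add: field_simps)
  have "ln (t / \<epsilon> - 1) \<le> ln (t / \<epsilon>)" using q by (subst ln_le_cancel_iff) auto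
  then have "(\<epsilon>/2) * (ln (t / \<epsilon> - 1) + 1) \<le> (\<epsilon>/2) * (ln (t/\<epsilon>) + 1)"
    using e by (intro mult_left_mono) auto
  moreover have "u (x,t) - ueps (x,t) \<le> \<bar>ueps (x, t) - u (x, t)\<bar>" by linarith
  ultimately show ?thesis using hA hB by simp
qed

end
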